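(* Let $\mathbf X$ be a coin process with $\underline H(\mathbf X)>0$ and $\mathbf Y$ any target process. Then \[ R^\star_{\mathrm{int}}(\mathbf X,\mathbf Y)\le\frac{\overline H(\mathbf Y)}{\underline H(\mathbf X)}, \qquad R^\star(\mathbf X,\mathbf Y)\ge\max\Big[\frac{\overline H(\mathbf Y)}{\overline H(\mathbf X)},\frac{\underline H(\mathbf Y)}{\underline H(\mathbf X)}\Big]. \]
   Context: Logarithms are base 2. $\mathcal X$, $\mathcal Y$ are finite sets; $\mathbf X=\{X^m\}$ (coin) and $\mathbf Y=\{Y^n\}$ (target) are arbitrary processes given by consistent families of distributions. Spectral sup- and inf-entropy: $\overline H(\mathbf X)=\inf\{\lambda:\lim_{n\to\infty}\Pr(\frac1n\log\frac{1}{P_{X^n}(X^n)}\ge\lambda)=0\}$, $\underline H(\mathbf X)=\sup\{\lambda:\lim_{n\to\infty}\Pr(\frac1n\log\frac{1}{P_{X^n}(X^n)}\le\lambda)=0\}$, and likewise for $\mathbf Y$. A random number generation algorithm for $Y^n$ is a map $\phi:\bigcup_{i\ge0}\mathcal X^i\to\{\bot\}\cup\mathcal Y^n$; its leaves are the finite sequences $s$ with $\phi(s)\in\mathcal Y^n$ and $\phi(s')=\bot$ for all proper prefixes $s'$; it is required to satisfy the validity condition $\sum_{\text{leaves } s:\phi(s)=y^n}P_{X^{|s|}}(s)=P_{Y^n}(y^n)$ for all $y^n$. Its stopping time is the length of the (first) leaf reached by $X_1,X_2,\dots$ ($\infty$ if none). For a sequence of algorithms $\phi_n$ ($n=1,2,\dots$)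 generating $Y^n$ with stopping times $T_n$, a rate $R\ge0$ is achievable if $\lim_{n\to\infty}\Pr(T_n>nR)=0$. $R^\star(\mathbf X,\mathbf Y)$ is the infimum of rates achievable by some sequence of valid algorithms, and $R^\star_{\mathrm{int}}(\mathbf X,\mathbf Y)$ the infimum of rates achievable when $\phi_n$ is the interval algorithm. Interval algorithm: for $s\in\mathcal X^i$ define $\mathcal I_s=[\underline\alpha_s,\overline\alpha_s)$ by $\mathcal I_\bot=[0,1)$ and $\underline\alpha_{sx}=\underline\alpha_s+(\overline\alpha_s-\underline\alpha_s)\sum_{k<x}P_{X_{i+1}|X^i}(k|s)$, $\overline\alpha_{sx}=\underline\alpha_s+(\overline\alpha_s-\underline\alpha_s)\sum_{k\le x}P_{X_{i+1}|X^i}(k|s)$ (identifying $\mathcal X=\{1,\dots,M\}$); define $\mathcal J_t$, $t\in\mathcal Y^j$, likewise from $P_{Y_{j+1}|Y^j}$; the algorithm stops at the first $m$ with $\mathcal I_{X^m}\subseteq\mathcal J_{y^n}$ for some $y^n\in\mathcal Y^n$ and outputs that $y^n$. *)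

theory Defs
  imports "HOL-Analysis.Analysis"
begin

text \<open>A process over a finite alphabet is a consistent family of distributions,
  represented by the function mapping a finite sequence s to P_{X^|s|}(s).\<close>

definition process :: "('a::finite list \<Rightarrow> real) \<Rightarrow> bool" where
  "process P \<longleftrightarrow> P [] = 1 \<and> (\<forall>s. 0 \<le> P s) \<and> (\<forall>s. P s = (\<Sum>a\<in>UNIV. P (s @ [a])))"

definition prob_len :: "('a::finite list \<Rightarrow> real) \<Rightarrow> nat \<Rightarrow> ('a list \<Rightarrow> bool) \<Rightarrow> real" where
  "prob_len P n A = (\<Sum>s\<in>{s. length s = n \<and> A s}. P s)"

definition info_rate :: "('a list \<Rightarrow> real) \<Rightarrow> nat \<Rightarrow> 'a list \<Rightarrow> real" where
  "info_rate P n s = (1 / real n) * log 2 (1 / P s)"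

definition sup_ent :: "('a::finite list \<Rightarrow> real) \<Rightarrow> real" where
  "sup_ent P = Inf {t. (\<lambda>n. prob_len P n (\<lambda>s. info_rate P n s \<ge> t)) \<longlonglongrightarrow> 0}"

definition inf_ent :: "('a::finite list \<Rightarrow> real) \<Rightarrow> real" where
  "inf_ent P = Sup {t. (\<lambda>n. prob_len P n (\<lambda>s. info_rate P n s \<le> t)) \<longlonglongrightarrow> 0}"

text \<open>Random number generation algorithms: None plays the role of \<bottom>.\<close>
definition is_leaf :: "('a list \<Rightarrow> 'b list option) \<Rightarrow> 'a list \<Rightarrow> bool" where
  "is_leaf \<phi> s \<longleftrightarrow> \<phi> s \<noteq> None \<and> (\<forall>i<length s. \<phi> (take i s) = None)"

definition valid_alg ::
  "('a::finite list \<Rightarrow> real) \<Rightarrow> ('b::finite list \<Rightarrow> real) \<Rightarrow> nat \<Rightarrow> ('a list \<Rightarrow> 'b list option) \<Rightarrow> bool" where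
  "valid_alg PX PY n \<phi> \<longleftrightarrow>
     (\<forall>s ys. \<phi> s = Some ys \<longrightarrow> length ys = n) \<and>
     (\<forall>ys. length ys = n \<longrightarrow> (\<Sum>\<^sub>\<infinity>s\<in>{s. is_leaf \<phi> s \<and> \<phi> s = Some ys}. PX s) = PY ys)"

text \<open>Pr(T > r) for the stopping time T of \<phi> (for r \<ge> 0): T > r iff T > floor r iff
  \<phi>(X^i) = \<bottom> for all i \<le> floor r.\<close>
definition prob_T_gt :: "('a::finite list \<Rightarrow> real) \<Rightarrow> ('a list \<Rightarrow> 'b list option) \<Rightarrow> real \<Rightarrow> real" where
  "prob_T_gt PX \<phi> r = prob_len PX (nat \<lfloor>r\<rfloor>) (\<lambda>s. \<forall>i\<le>length s. \<phi> (take i s) = None)"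

definition achievable :: "('a::finite list \<Rightarrow> real) \<Rightarrow> (nat \<Rightarrow> 'a list \<Rightarrow> 'b list option) \<Rightarrow> real \<Rightarrow> bool" where
  "achievable PX \<phi>s R \<longleftrightarrow> 0 \<le> R \<and> (\<lambda>n. prob_T_gt PX (\<phi>s n) (real n * R)) \<longlonglongrightarrow> 0"

definition R_star :: "('a::finite list \<Rightarrow> real) \<Rightarrow> ('b::finite list \<Rightarrow> real) \<Rightarrow> ereal" where
  "R_star PX PY = Inf {ereal R | R. \<exists>\<phi>s. (\<forall>n\<ge>1. valid_alg PX PY n (\<phi>s n)) \<and> achievable PX \<phi>s R}"

definition cond_prob :: "('a list \<Rightarrow> real) \<Rightarrow> 'a list \<Rightarrow> 'a \<Rightarrow> real" where
  "cond_prob P s k = P (s @ [k]) / P s"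

fun interval_aux :: "('a::{finite,linorder} list \<Rightarrow> real) \<Rightarrow> 'a list \<Rightarrow> real \<times> real \<Rightarrow> 'a list \<Rightarrow> real \<times> real" where
  "interval_aux P pre (lo, hi) [] = (lo, hi)"
| "interval_aux P pre (lo, hi) (x # xs) =
     interval_aux P (pre @ [x])
       (lo + (hi - lo) * (\<Sum>k\<in>{k. k < x}. cond_prob P pre k),
        lo + (hi - lo) * (\<Sum>k\<in>{k. k \<le> x}. cond_prob P pre k)) xs"

definition ends :: "('a::{finite,linorder} list \<Rightarrow> real) \<Rightarrow> 'a list \<Rightarrow> real \<times> real" where
  "ends P s = interval_aux P [] (0, 1) s"

definition interval :: "('a::{finite,linorder} list \<Rightarrow> real) \<Rightarrow> 'a list \<Rightarrow> real set" where
  "interval P s = {fst (ends P s) ..< snd (ends P s)}"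

definition interval_alg ::
  "('a::{finite,linorder} list \<Rightarrow> real) \<Rightarrow> ('b::{finite,linorder} list \<Rightarrow> real) \<Rightarrow> nat \<Rightarrow> 'a list \<Rightarrow> 'b list option" where
  "interval_alg PX PY n s =
     (if \<exists>ys. length ys = n \<and> interval PX s \<subseteq> interval PY ys
      then Some (SOME ys. length ys = n \<and> interval PX s \<subseteq> interval PY ys) else None)"

definition R_star_int :: "('a::{finite,linorder} list \<Rightarrow> real) \<Rightarrow> ('b::{finite,linorder} list \<Rightarrow> real) \<Rightarrow> ereal" where
  "R_star_int PX PY = Inf {ereal R | R. achievable PX (\<lambda>n. interval_alg PX PY n) R}"

end

theory Submission
  imports Defs
begin


lemma proc_nonneg: "process P \<Longrightarrow> 0 \<le> P s"
  unfolding process_def by blast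

lemma proc_cons: "process P \<Longrightarrow> P s = (\<Sum>a\<in>UNIV. P (s @ [a]))"
  unfolding process_def by blast

lemma proc_nil: "process P \<Longrightarrow> P [] = 1"
  unfolding process_def by blast

lemma snoc_set_eq:
  "{x::'a list. length x = Suc L \<and> take k x = u} =
   (\<lambda>(x,a). x @ [a]) ` ({x. length x = L \<and> take k x = u} \<times> UNIV)" if "k \<le> L"
proof (rule set_eqI, rule iffI)
  fix y :: "'a list" assume "y \<in> {x. length x = Suc L \<and> take k x = u}"
  then have y: "length y = Suc L" "take k y = u" by auto
  then have "y = butlast y @ [last y]"
    by (metis append_butlast_last_id list.size(3) nat.distinct(1))
  moreover have "take k (butlast y) = u" using y that
    by (simp add: butlast_conv_take take_take)
  moreover have "length (butlast y) = L" using y by simp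
  ultimately show "y \<in> (\<lambda>(x,a). x @ [a]) ` ({x. length x = L \<and> take k x = u} \<times> UNIV)"
    by (metis (mono_tags, lifting) UNIV_I case_prod_conv image_eqI mem_Collect_eq mem_Sigma_iff)
next
  fix y assume "y \<in> (\<lambda>(x,a). x @ [a]) ` ({x::'a list. length x = L \<and> take k x = u} \<times> UNIV)"
  then show "y \<in> {x. length x = Suc L \<and> take k x = u}" using that by auto
qed

lemma finite_len: "finite {x::'a::finite list. length x = L \<and> Q x}"
  using finite_lists_length_eq[of "UNIV::'a set" L] by (rule rev_finite_subset) auto

lemma ext_sum:
  assumes P: "process P" and u: "length u = k"
  shows "k \<le> L \<Longrightarrow> (\<Sum>x | length x = L \<and> take k x = u. P x) = P u"
proof (induction L)
  case 0
  then have "{x::'a list. length x = 0 \<and> take k x = u} = {u}" using u by auto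
  then show ?case by simp
next
  case (Suc L)
  show ?case
  proof (cases "k = Suc L")
    case True
    then have "{x::'a list. length x = Suc L \<and> take k x = u} = {u}" using u by auto
    then show ?thesis by simp
  next
    case False
    then have kL: "k \<le> L" using Suc by simp
    have inj: "inj_on (\<lambda>(x,a). x @ [a]) ({x::'a list. length x = L \<and> take k x = u} \<times> UNIV)"
      by (auto simp: inj_on_def)
    have "(\<Sum>x | length x = Suc L \<and> take k x = u. P x)
        = (\<Sum>xa \<in> {x::'a list. length x = L \<and> take k x = u} \<times> UNIV. P (fst xa @ [snd xa]))"
      unfolding snoc_set_eq[OF kL] by (subst sum.reindex[OF inj]) (simp add: case_prod_beta)
    also have "\<dots> = (\<Sum>x | length x = L \<and> take k x = u. \<Sum>a\<in>UNIV. P (x @ [a]))"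
      by (simp only: sum.cartesian_product) (simp add: case_prod_beta)
    also have "\<dots> = (\<Sum>x | length x = L \<and> take k x = u. P x)"
      by (rule sum.cong[OF refl]) (rule proc_cons[OF P, symmetric])
    finally show ?thesis using Suc.IH kL by simp
  qed
qed

lemma sum_len_one: "process P \<Longrightarrow> (\<Sum>x | length x = L. P x) = 1"
  using ext_sum[of P "[]" 0 L] proc_nil[of P] by simp

lemma proc_le_one: "process P \<Longrightarrow> P s \<le> 1"
proof -
  assume P: "process P"
  have "P s \<le> (\<Sum>x | length x = length s. P x)"
    by (rule member_le_sum) (auto simp: proc_nonneg[OF P] finite_len[where Q="\<lambda>_. True", simplified])
  then show ?thesis using sum_len_one[OF P] by simp
qed

lemma ext_sum_set:
  assumes P: "process P" and U: "\<And>u. u \<in> U \<Longrightarrow> length u = k" and kL: "k \<le> L"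
  shows "(\<Sum>x | length x = L \<and> take k x \<in> U. P x) = (\<Sum>u\<in>U. P u)"
proof -
  have fU: "finite U"
    by (rule finite_subset[OF _ finite_len[where L=k and Q="\<lambda>_. True"]]) (auto simp: U)
  have "(\<Sum>x | length x = L \<and> take k x \<in> U. P x)
      = (\<Sum>u\<in>U. \<Sum>x \<in> {x. length x = L \<and> take k x \<in> U}. if take k x = u then P x else 0)"
    by (subst sum.swap) (simp add: fU)
  also have "\<dots> = (\<Sum>u\<in>U. \<Sum>x | length x = L \<and> take k x = u. P x)"
  proof (rule sum.cong[OF refl])
    fix u assume "u \<in> U"
    have "(\<Sum>x \<in> {x. length x = L \<and> take k x \<in> U}. if take k x = u then P x else 0)
        = (\<Sum>x \<in> {x. length x = L \<and> take k x \<in> U} \<inter> {x. take k x = u}. P x)"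
      by (simp add: sum.inter_restrict finite_len)
    also have "{x. length x = L \<and> take k x \<in> U} \<inter> {x. take k x = u} = {x. length x = L \<and> take k x = u}"
      using \<open>u \<in> U\<close> by auto
    finally show "(\<Sum>x \<in> {x. length x = L \<and> take k x \<in> U}. if take k x = u then P x else 0)
        = (\<Sum>x | length x = L \<and> take k x = u. P x)" .
  qed
  also have "\<dots> = (\<Sum>u\<in>U. P u)"
    by (rule sum.cong[OF refl]) (rule ext_sum[OF P U kL])
  finally show ?thesis .
qed

lemma prefix_free_sum:
  assumes P: "process P" and fF: "finite F" and len: "\<And>s. s \<in> F \<Longrightarrow> length s \<le> L"
    and pf: "\<And>s s'. s \<in> F \<Longrightarrow> s' \<in> F \<Longrightarrow> take (length s) s' = s \<Longrightarrow> s = s'"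
  shows "(\<Sum>s\<in>F. P s) = (\<Sum>x | length x = L \<and> (\<exists>s\<in>F. take (length s) x = s). P x)"
proof -
  have eq: "{x. length x = L \<and> (\<exists>s\<in>F. take (length s) x = s)}
      = (\<Union>s\<in>F. {x. length x = L \<and> take (length s) x = s})" by auto
  have disj: "{x. length x = L \<and> take (length s) x = s} \<inter> {x. length x = L \<and> take (length s') x = s'} = {}"
    if "s \<in> F" "s' \<in> F" "s \<noteq> s'" for s s'
  proof (rule ccontr)
    assume "\<not> ?thesis"
    then obtain x where x: "take (length s) x = s" "take (length s') x = s'" by auto
    show False
    proof (cases "length s \<le> length s'")
      case True
      then have "take (length s) s' = s" using x by (metis min.absorb1 take_take)
      then show False using pf that by blast
    next
      case False
      then have "take (length s') s = s'" using x by (metis le_cases min.absorb1 take_take)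
      then show False using pf that by metis
    qed
  qed
  have "(\<Sum>x | length x = L \<and> (\<exists>s\<in>F. take (length s) x = s). P x)
      = (\<Sum>s\<in>F. \<Sum>x | length x = L \<and> take (length s) x = s. P x)"
    unfolding eq by (rule sum.UNION_disjoint) (use fF finite_len disj in auto)
  also have "\<dots> = (\<Sum>s\<in>F. P s)"
    by (rule sum.cong[OF refl]) (rule ext_sum[OF P refl len])
  finally show ?thesis by simp
qed




lemma leaf_pf: "is_leaf \<phi> s \<Longrightarrow> is_leaf \<phi> s' \<Longrightarrow> take (length s) s' = s \<Longrightarrow> s = s'"
proof -
  assume a: "is_leaf \<phi> s" "is_leaf \<phi> s'" "take (length s) s' = s"
  have "\<not> length s < length s'"
  proof
    assume "length s < length s'"
    then have "\<phi> (take (length s) s') = None" using a(2) unfolding is_leaf_def by blast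
    then show False using a(1,3) unfolding is_leaf_def by simp
  qed
  moreover have "length s \<le> length s'" using arg_cong[OF a(3), of length] by (simp add: min_def split: if_splits)
  ultimately have "length s = length s'" by simp
  then show "s = s'" using a(3) by simp
qed

lemma leaf_pf_set: "F \<subseteq> {s. is_leaf \<phi> s \<and> Q s} \<Longrightarrow> (\<And>s s'. s \<in> F \<Longrightarrow> s' \<in> F \<Longrightarrow> take (length s) s' = s \<Longrightarrow> s = s')"
proof -
  fix s s' assume a: "F \<subseteq> {s. is_leaf \<phi> s \<and> Q s}" "s \<in> F" "s' \<in> F" "take (length s) s' = s"
  then have "is_leaf \<phi> s" "is_leaf \<phi> s'" by auto
  then show "s = s'" using leaf_pf a(4) by blast
qed

lemma first_leaf:
  assumes "\<phi> (take i x) \<noteq> None" "i \<le> length x"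
  shows "\<exists>j\<le>i. is_leaf \<phi> (take j x)"
proof -
  define j where "j = (LEAST j. \<phi> (take j x) \<noteq> None)"
  have j1: "\<phi> (take j x) \<noteq> None" unfolding j_def by (rule LeastI[of _ i]) (rule assms(1))
  have j2: "j \<le> i" unfolding j_def by (rule Least_le) (rule assms(1))
  have "is_leaf \<phi> (take j x)" unfolding is_leaf_def
  proof (intro conjI allI impI j1)
    fix l assume "l < length (take j x)"
    then have "l < j" by simp
    then have "\<phi> (take l x) = None" using not_less_Least[of l "\<lambda>j. \<phi> (take j x) \<noteq> None"] j_def by blast
    then show "\<phi> (take l (take j x)) = None" using \<open>l < j\<close> by (simp add: min_def)
  qed
  then show ?thesis using j2 by blast
qed

lemma finite_len_le: "finite {x::'a::finite list. length x \<le> L}"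
proof -
  have "{x::'a list. length x \<le> L} = (\<Union>l\<in>{..L}. {x. length x = l})" by auto
  moreover have "finite {x::'a list. length x = l}" for l using finite_len[where Q="\<lambda>_. True"] by simp
  ultimately show ?thesis by simp
qed

lemma leaves_sum_le:
  assumes P: "process P" and fF: "finite F" and F: "F \<subseteq> {s. is_leaf \<phi> s \<and> True}"
  shows "(\<Sum>s\<in>F. P s) \<le> 1"
proof -
  obtain L where L: "\<And>s. s \<in> F \<Longrightarrow> length s \<le> L"
    using fF by (metis finite_nat_set_iff_bounded_le finite_imageI image_eqI)
  have "(\<Sum>s\<in>F. P s) = (\<Sum>x | length x = L \<and> (\<exists>s\<in>F. take (length s) x = s). P x)"
    by (rule prefix_free_sum[OF P fF L]) (use leaf_pf_set[OF F] in auto)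
  also have "\<dots> \<le> (\<Sum>x | length x = L. P x)"
    by (rule sum_mono2) (auto simp: finite_len[where Q="\<lambda>_. True", simplified] proc_nonneg[OF P])
  finally show ?thesis using sum_len_one[OF P] by simp
qed

lemma leaves_summable:
  assumes P: "process P" and A: "A \<subseteq> {s. is_leaf \<phi> s}"
  shows "P summable_on A"
  apply (rule nonneg_bdd_above_summable_on)
   apply (simp add: proc_nonneg[OF P])
  apply (rule bdd_aboveI[of _ 1])
  using leaves_sum_le[OF P, of _ \<phi>] A by auto

definition Ushort where "Ushort \<phi> k = {u. length u = k \<and> (\<forall>i\<le>k. \<phi> (take i u) = None)}"
definition shortL where "shortL \<phi> k y = {s. is_leaf \<phi> s \<and> \<phi> s = Some y \<and> length s \<le> k}"
definition longL where "longL \<phi> k y = {s. is_leaf \<phi> s \<and> \<phi> s = Some y \<and> k < length s}"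
definition Cset where "Cset \<phi> k m y = {x. length x = m \<and> (\<exists>s\<in>shortL \<phi> k y. take (length s) x = s)}"

lemma long_finite_le:
  assumes P: "process P" and fF: "finite F" and F: "F \<subseteq> {s. is_leaf \<phi> s \<and> k < length s}"
  shows "(\<Sum>s\<in>F. P s) \<le> (\<Sum>u\<in>Ushort \<phi> k. P u)"
proof -
  obtain L0 where L0: "\<And>s. s \<in> F \<Longrightarrow> length s \<le> L0"
    using fF by (metis finite_nat_set_iff_bounded_le finite_imageI image_eqI)
  define L where "L = max L0 k"
  have L: "\<And>s. s \<in> F \<Longrightarrow> length s \<le> L" "k \<le> L" using L0 unfolding L_def by force+
  have "(\<Sum>s\<in>F. P s) = (\<Sum>x | length x = L \<and> (\<exists>s\<in>F. take (length s) x = s). P x)"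
    by (rule prefix_free_sum[OF P fF L(1)]) (use leaf_pf_set[OF F] in auto)
  also have "\<dots> \<le> (\<Sum>x | length x = L \<and> take k x \<in> Ushort \<phi> k. P x)"
  proof (rule sum_mono2)
    show "finite {x. length x = L \<and> take k x \<in> Ushort \<phi> k}" by (rule finite_len)
    show "{x. length x = L \<and> (\<exists>s\<in>F. take (length s) x = s)} \<subseteq> {x. length x = L \<and> take k x \<in> Ushort \<phi> k}"
    proof (rule subsetI)
      fix x assume "x \<in> {x. length x = L \<and> (\<exists>s\<in>F. take (length s) x = s)}"
      then obtain s where x: "length x = L" "s \<in> F" "take (length s) x = s" by auto
      then have s: "is_leaf \<phi> s" "k < length s" using F by auto
      have l: "length (take k x) = k" using x L by simp
      have n: "\<phi> (take i (take k x)) = None" if "i \<le> k" for i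
      proof -
        have "take i (take k x) = take i s" using x s that
          by (metis min.absorb1 order.strict_implies_order take_take dual_order.trans)
        moreover have "\<phi> (take i s) = None" using s \<open>i \<le> k\<close> unfolding is_leaf_def by simp
        ultimately show ?thesis by simp
      qed
      show "x \<in> {x. length x = L \<and> take k x \<in> Ushort \<phi> k}"
        using l n x(1) by (simp add: Ushort_def)
    qed
  qed (simp add: proc_nonneg[OF P])
  also have "\<dots> = (\<Sum>u\<in>Ushort \<phi> k. P u)"
    by (rule ext_sum_set[OF P _ L(2)]) (simp add: Ushort_def)
  finally show ?thesis .
qed

lemma shortL_finite: "finite (shortL (\<phi>::'a::finite list \<Rightarrow> 'b list option) k y)"
  by (rule finite_subset[OF _ finite_len_le[of k]]) (auto simp: shortL_def)

lemma valid_PY: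
  assumes PX: "process PX" and V: "valid_alg PX PY n \<phi>" and y: "length y = n" and km: "k \<le> m"
  shows "PY y = (\<Sum>x\<in>Cset \<phi> k m y. PX x) + infsum PX (longL \<phi> k y)"
proof -
  have "PY y = infsum PX {s. is_leaf \<phi> s \<and> \<phi> s = Some y}" using V y unfolding valid_alg_def by simp
  also have "{s. is_leaf \<phi> s \<and> \<phi> s = Some y} = shortL \<phi> k y \<union> longL \<phi> k y"
    by (auto simp: shortL_def longL_def)
  also have "infsum PX (shortL \<phi> k y \<union> longL \<phi> k y) = infsum PX (shortL \<phi> k y) + infsum PX (longL \<phi> k y)"
    by (rule infsum_Un_disjoint) (auto simp: shortL_def longL_def intro!: leaves_summable[OF PX])
  also have "infsum PX (shortL \<phi> k y) = (\<Sum>s\<in>shortL \<phi> k y. PX s)" by (simp add: shortL_finite)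
  also have "\<dots> = (\<Sum>x\<in>Cset \<phi> k m y. PX x)"
    unfolding Cset_def
    by (rule prefix_free_sum[OF PX shortL_finite]) (use km leaf_pf in \<open>auto simp: shortL_def\<close>)
  finally show ?thesis .
qed

lemma Cset_le_PY:
  assumes PX: "process PX" and V: "valid_alg PX PY n \<phi>" and y: "length y = n" and km: "k \<le> m"
  shows "(\<Sum>x\<in>Cset \<phi> k m y. PX x) \<le> PY y"
proof -
  have "0 \<le> infsum PX (longL \<phi> k y)" by (rule infsum_nonneg) (simp add: proc_nonneg[OF PX])
  then show ?thesis using valid_PY[OF assms] by simp
qed

lemma long_total:
  assumes PX: "process PX" and fS: "finite S"
  shows "(\<Sum>y\<in>S. infsum PX (longL \<phi> k y)) \<le> (\<Sum>u\<in>Ushort \<phi> k. PX u)"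
proof -
  have "(\<Sum>y\<in>S. infsum PX (longL \<phi> k y)) = infsum PX (\<Union>y\<in>S. longL \<phi> k y)"
    by (rule sum_infsum[OF fS]) (auto simp: longL_def intro!: leaves_summable[OF PX])
  also have "\<dots> \<le> (\<Sum>u\<in>Ushort \<phi> k. PX u)"
  proof (rule infsum_le_finite_sums)
    show "PX summable_on (\<Union>y\<in>S. longL \<phi> k y)"
      by (rule leaves_summable[OF PX]) (auto simp: longL_def)
    fix F assume "finite F" "F \<subseteq> (\<Union>y\<in>S. longL \<phi> k y)"
    then show "sum PX F \<le> (\<Sum>u\<in>Ushort \<phi> k. PX u)"
      by (intro long_finite_le[OF PX]) (auto simp: longL_def)
  qed
  finally show ?thesis .
qed

lemma Cset_disj:
  assumes "y \<noteq> y'" shows "Cset \<phi> k m y \<inter> Cset \<phi> k m y' = {}"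
proof (rule ccontr)
  assume "\<not> ?thesis"
  then obtain x s s' where s: "s \<in> shortL \<phi> k y" "take (length s) x = s"
    and s': "s' \<in> shortL \<phi> k y'" "take (length s') x = s'" unfolding Cset_def by blast
  have l: "is_leaf \<phi> s" "is_leaf \<phi> s'" "\<phi> s = Some y" "\<phi> s' = Some y'" using s s' by (auto simp: shortL_def)
  have "s = s'"
  proof (cases "length s \<le> length s'")
    case True
    then have "take (length s) s' = s" using s s' by (metis min.absorb1 take_take)
    then show ?thesis using leaf_pf l by blast
  next
    case False
    then have "take (length s') s = s'" using s s' by (metis le_cases min.absorb1 take_take)
    then show ?thesis using leaf_pf l by metis
  qed
  then show False using l assms by simp
qed

lemma not_Cset_Ushort:
  assumes V: "valid_alg PX PY n \<phi>" and x: "length x = m" and km: "k \<le> m"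
    and nC: "\<And>y. length y = n \<Longrightarrow> x \<notin> Cset \<phi> k m y"
  shows "take k x \<in> Ushort \<phi> k"
proof -
  have "\<phi> (take i x) = None" if i: "i \<le> k" for i
  proof (rule ccontr)
    assume a: "\<phi> (take i x) \<noteq> None"
    have il: "i \<le> length x" using i km x by simp
    obtain j where j: "j \<le> i" "is_leaf \<phi> (take j x)" using first_leaf[of \<phi> i x, OF a il] by blast
    then obtain y where y: "\<phi> (take j x) = Some y" unfolding is_leaf_def by blast
    then have ly: "length y = n" using V unfolding valid_alg_def by simp
    have lj: "length (take j x) = j" using j il by simp
    have jk: "length (take j x) \<le> k" using lj j(1) i by linarith
    have sh: "take j x \<in> shortL \<phi> k y" unfolding shortL_def using j(2) y jk by blast
    have tt: "take (length (take j x)) x = take j x" using lj by simp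
    have "x \<in> Cset \<phi> k m y" unfolding Cset_def using x sh tt by blast
    then show False using nC ly by blast
  qed
  then have "\<phi> (take i (take k x)) = None" if "i \<le> k" for i using that by (simp add: min_def)
  moreover have "length (take k x) = k" using x km by simp
  ultimately show ?thesis unfolding Ushort_def by blast
qed

lemma prob_T_gt_eq: "prob_T_gt PX \<phi> r = (\<Sum>u\<in>Ushort \<phi> (nat \<lfloor>r\<rfloor>). PX u)"
proof -
  have "{s. length s = nat \<lfloor>r\<rfloor> \<and> (\<forall>i\<le>length s. \<phi> (take i s) = None)} = Ushort \<phi> (nat \<lfloor>r\<rfloor>)"
    unfolding Ushort_def by (rule Collect_cong) (metis)
  then show ?thesis unfolding prob_T_gt_def prob_len_def by simp
qed

lemma Cset_sub: "Cset \<phi> k m y \<subseteq> {x. length x = m}" unfolding Cset_def by auto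

lemma Cset_finite: "finite (Cset (\<phi>::'a::finite list \<Rightarrow> 'b list option) k m y)"
  by (rule finite_subset[OF Cset_sub]) (rule finite_len[where Q="\<lambda>_. True", simplified])

lemma finite_len0: "finite {x::'a::finite list. length x = m}"
  using finite_len[where Q="\<lambda>_. True"] by simp

lemma K_bound:
  assumes PX: "process PX" and V: "valid_alg PX PY n \<phi>" and km: "k \<le> m"
    and T: "T \<subseteq> {y. length y = n}" and fT: "finite T" and Te: "\<And>y. y \<in> T \<Longrightarrow> PY y \<le> e"
    and G: "G \<subseteq> {x. length x = m}" and e0: "0 \<le> e"
  shows "(\<Sum>y\<in>T. \<Sum>x\<in>G \<inter> Cset \<phi> k m y. PX x) \<le> real (card G) * e"
proof -
  have fG: "finite G" by (rule finite_subset[OF G finite_len0])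
  let ?T' = "{y\<in>T. G \<inter> Cset \<phi> k m y \<noteq> {}}"
  have "(\<Sum>y\<in>T. \<Sum>x\<in>G \<inter> Cset \<phi> k m y. PX x) = (\<Sum>y\<in>?T'. \<Sum>x\<in>G \<inter> Cset \<phi> k m y. PX x)"
    by (rule sum.mono_neutral_right) (use fT in auto)
  also have "\<dots> \<le> (\<Sum>y\<in>?T'. PY y)"
  proof (rule sum_mono)
    fix y assume y: "y \<in> ?T'"
    have "(\<Sum>x\<in>G \<inter> Cset \<phi> k m y. PX x) \<le> (\<Sum>x\<in>Cset \<phi> k m y. PX x)"
      by (rule sum_mono2) (auto simp: Cset_finite proc_nonneg[OF PX])
    also have "\<dots> \<le> PY y" by (rule Cset_le_PY[OF PX V _ km]) (use y T in auto)
    finally show "(\<Sum>x\<in>G \<inter> Cset \<phi> k m y. PX x) \<le> PY y" .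
  qed
  also have "\<dots> \<le> (\<Sum>y\<in>?T'. e)" by (rule sum_mono) (use Te in auto)
  also have "\<dots> = real (card ?T') * e" by simp
  also have "\<dots> \<le> real (card G) * e"
  proof -
    define f where "f y = (SOME x. x \<in> G \<inter> Cset \<phi> k m y)" for y
    have fin: "f y \<in> G \<inter> Cset \<phi> k m y" if "y \<in> ?T'" for y
      unfolding f_def by (rule someI_ex) (use that in blast)
    have inj: "inj_on f ?T'"
    proof (rule inj_onI)
      fix y y' assume a: "y \<in> ?T'" "y' \<in> ?T'" "f y = f y'"
      have "f y \<in> Cset \<phi> k m y" using fin[OF a(1)] by blast
      moreover have "f y \<in> Cset \<phi> k m y'" using fin[OF a(2)] a(3) by simp
      ultimately have "f y \<in> Cset \<phi> k m y \<inter> Cset \<phi> k m y'" by blast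
      then show "y = y'" using Cset_disj[of y y' \<phi> k m] by blast
    qed
    have sub: "f ` ?T' \<subseteq> G" using fin by blast
    have "card ?T' \<le> card G" by (rule card_inj_on_le[OF inj sub fG])
    then show ?thesis using e0 by (simp add: mult_right_mono)
  qed
  finally show ?thesis .
qed

lemma bound_Y:
  assumes PX: "process PX" and V: "valid_alg PX PY n \<phi>" and km: "k \<le> m"
    and S: "S \<subseteq> {y. length y = n}" and Se: "\<And>y. y \<in> S \<Longrightarrow> PY y \<le> e"
    and G: "G \<subseteq> {x. length x = m}" and e0: "0 \<le> e"
  shows "(\<Sum>y\<in>S. PY y) \<le> (\<Sum>u\<in>Ushort \<phi> k. PX u) + (\<Sum>x | length x = m \<and> x \<notin> G. PX x) + real (card G) * e"
proof -
  have fS: "finite S" by (rule finite_subset[OF S finite_len0])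
  have "(\<Sum>y\<in>S. PY y) = (\<Sum>y\<in>S. (\<Sum>x\<in>Cset \<phi> k m y. PX x) + infsum PX (longL \<phi> k y))"
    by (rule sum.cong[OF refl]) (rule valid_PY[OF PX V _ km], use S in auto)
  also have "\<dots> = (\<Sum>y\<in>S. \<Sum>x\<in>Cset \<phi> k m y. PX x) + (\<Sum>y\<in>S. infsum PX (longL \<phi> k y))"
    by (rule sum.distrib)
  also have "(\<Sum>y\<in>S. infsum PX (longL \<phi> k y)) \<le> (\<Sum>u\<in>Ushort \<phi> k. PX u)"
    by (rule long_total[OF PX fS])
  also have "(\<Sum>y\<in>S. \<Sum>x\<in>Cset \<phi> k m y. PX x)
      = (\<Sum>y\<in>S. \<Sum>x\<in>G \<inter> Cset \<phi> k m y. PX x) + (\<Sum>y\<in>S. \<Sum>x\<in>Cset \<phi> k m y - G. PX x)"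
  proof -
    have "(\<Sum>x\<in>Cset \<phi> k m y. PX x) = (\<Sum>x\<in>G \<inter> Cset \<phi> k m y. PX x) + (\<Sum>x\<in>Cset \<phi> k m y - G. PX x)" for y
    proof -
      have "(\<Sum>x\<in>Cset \<phi> k m y. PX x) = (\<Sum>x\<in>Cset \<phi> k m y \<inter> G. PX x) + (\<Sum>x\<in>Cset \<phi> k m y - G. PX x)"
        by (rule sum.Int_Diff[OF Cset_finite])
      then show ?thesis by (simp add: Int_commute)
    qed
    then show ?thesis by (simp add: sum.distrib)
  qed
  also have "(\<Sum>y\<in>S. \<Sum>x\<in>G \<inter> Cset \<phi> k m y. PX x) \<le> real (card G) * e"
    by (rule K_bound[OF PX V km S fS Se G e0])
  also have "(\<Sum>y\<in>S. \<Sum>x\<in>Cset \<phi> k m y - G. PX x) = (\<Sum>x\<in>(\<Union>y\<in>S. Cset \<phi> k m y - G). PX x)"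
  proof (rule sum.UNION_disjoint[symmetric, OF fS])
    show "\<forall>y\<in>S. finite (Cset \<phi> k m y - G)" using Cset_finite by blast
    show "\<forall>y\<in>S. \<forall>y'\<in>S. y \<noteq> y' \<longrightarrow> (Cset \<phi> k m y - G) \<inter> (Cset \<phi> k m y' - G) = {}"
      using Cset_disj by blast
  qed
  also have "\<dots> \<le> (\<Sum>x | length x = m \<and> x \<notin> G. PX x)"
  proof (rule sum_mono2)
    show "finite {x. length x = m \<and> x \<notin> G}" by (rule finite_len)
    show "(\<Union>y\<in>S. Cset \<phi> k m y - G) \<subseteq> {x. length x = m \<and> x \<notin> G}"
      using Cset_sub by blast
  qed (simp add: proc_nonneg[OF PX])
  finally show ?thesis by linarith
qed

lemma bound_X:
  fixes PY :: "'b::finite list \<Rightarrow> real"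
  assumes PX: "process PX" and V: "valid_alg PX PY n \<phi>" and km: "k \<le> m"
    and S: "S \<subseteq> {y. length y = n}" and Se: "\<And>y. y \<in> S \<Longrightarrow> PY y \<le> e"
    and G: "G \<subseteq> {x. length x = m}" and e0: "0 \<le> e"
  shows "(\<Sum>x\<in>G. PX x) \<le> (\<Sum>u\<in>Ushort \<phi> k. PX u) + (\<Sum>y | length y = n \<and> y \<notin> S. PY y) + real (card G) * e"
proof -
  have fS: "finite S" by (rule finite_subset[OF S finite_len0])
  have fG: "finite G" by (rule finite_subset[OF G finite_len0])
  define W where "W = {x. take k x \<in> Ushort \<phi> k}"
  define Yn where "Yn = {y::'b list. length y = n}"
  have fYn: "finite Yn" unfolding Yn_def by (rule finite_len0)
  have "(\<Sum>x\<in>G. PX x) = (\<Sum>x\<in>G \<inter> W. PX x) + (\<Sum>x\<in>G - W. PX x)"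
    by (rule sum.Int_Diff[OF fG])
  also have "(\<Sum>x\<in>G \<inter> W. PX x) \<le> (\<Sum>x | length x = m \<and> take k x \<in> Ushort \<phi> k. PX x)"
  proof (rule sum_mono2)
    show "finite {x. length x = m \<and> take k x \<in> Ushort \<phi> k}" by (rule finite_len)
    show "G \<inter> W \<subseteq> {x. length x = m \<and> take k x \<in> Ushort \<phi> k}" using G unfolding W_def by blast
  qed (simp add: proc_nonneg[OF PX])
  also have "\<dots> = (\<Sum>u\<in>Ushort \<phi> k. PX u)"
    by (rule ext_sum_set[OF PX _ km]) (simp add: Ushort_def)
  also have "(\<Sum>x\<in>G - W. PX x) \<le> (\<Sum>x\<in>(\<Union>y\<in>Yn. G \<inter> Cset \<phi> k m y). PX x)"
  proof (rule sum_mono2)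
    show "finite (\<Union>y\<in>Yn. G \<inter> Cset \<phi> k m y)" using fYn fG by blast
    show "G - W \<subseteq> (\<Union>y\<in>Yn. G \<inter> Cset \<phi> k m y)"
    proof
      fix x assume x: "x \<in> G - W"
      then have lx: "length x = m" using G by blast
      have "\<exists>y. length y = n \<and> x \<in> Cset \<phi> k m y"
      proof (rule ccontr)
        assume "\<not> ?thesis"
        then have "take k x \<in> Ushort \<phi> k" using not_Cset_Ushort[OF V lx km] by blast
        then show False using x unfolding W_def by blast
      qed
      then show "x \<in> (\<Union>y\<in>Yn. G \<inter> Cset \<phi> k m y)" using x unfolding Yn_def by blast
    qed
  qed (simp add: proc_nonneg[OF PX])
  also have "\<dots> = (\<Sum>y\<in>Yn. \<Sum>x\<in>G \<inter> Cset \<phi> k m y. PX x)"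
  proof (rule sum.UNION_disjoint[OF fYn])
    show "\<forall>y\<in>Yn. finite (G \<inter> Cset \<phi> k m y)" using fG by blast
    show "\<forall>y\<in>Yn. \<forall>y'\<in>Yn. y \<noteq> y' \<longrightarrow> (G \<inter> Cset \<phi> k m y) \<inter> (G \<inter> Cset \<phi> k m y') = {}"
      using Cset_disj by blast
  qed
  also have "\<dots> = (\<Sum>y\<in>S. \<Sum>x\<in>G \<inter> Cset \<phi> k m y. PX x) + (\<Sum>y\<in>Yn - S. \<Sum>x\<in>G \<inter> Cset \<phi> k m y. PX x)"
  proof -
    have "Yn \<inter> S = S" using S unfolding Yn_def by blast
    then show ?thesis using sum.Int_Diff[OF fYn, of _ S] by metis
  qed
  also have "(\<Sum>y\<in>S. \<Sum>x\<in>G \<inter> Cset \<phi> k m y. PX x) \<le> real (card G) * e"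
    by (rule K_bound[OF PX V km S fS Se G e0])
  also have "(\<Sum>y\<in>Yn - S. \<Sum>x\<in>G \<inter> Cset \<phi> k m y. PX x) \<le> (\<Sum>y\<in>Yn - S. PY y)"
  proof (rule sum_mono)
    fix y assume y: "y \<in> Yn - S"
    have "(\<Sum>x\<in>G \<inter> Cset \<phi> k m y. PX x) \<le> (\<Sum>x\<in>Cset \<phi> k m y. PX x)"
      by (rule sum_mono2) (auto simp: Cset_finite proc_nonneg[OF PX])
    also have "\<dots> \<le> PY y" by (rule Cset_le_PY[OF PX V _ km]) (use y in \<open>simp add: Yn_def\<close>)
    finally show "(\<Sum>x\<in>G \<inter> Cset \<phi> k m y. PX x) \<le> PY y" .
  qed
  also have "Yn - S = {y. length y = n \<and> y \<notin> S}" unfolding Yn_def by blast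
  finally show ?thesis by linarith
qed




lemma info_nonneg: "process P \<Longrightarrow> 0 \<le> info_rate P n s"
proof -
  assume P: "process P"
  have "0 \<le> log 2 (1 / P s)"
  proof (cases "P s = 0")
    case True then show ?thesis by (simp add: log_def)
  next
    case False
    then have "0 < P s" using proc_nonneg[OF P, of s] by simp
    moreover have "P s \<le> 1" by (rule proc_le_one[OF P])
    ultimately have "1 \<le> 1 / P s" "0 < 1 / P s" by simp_all
    then show ?thesis by simp
  qed
  then show ?thesis unfolding info_rate_def by simp
qed

lemma info_eq: "0 < p \<Longrightarrow> 0 < n \<Longrightarrow> info_rate (\<lambda>_. p) n s = - log 2 p / real n"
  unfolding info_rate_def by (simp add: log_divide)

lemma info_ge_iff:
  assumes "0 < P s" "0 < n"
  shows "t \<le> info_rate P n s \<longleftrightarrow> P s \<le> 2 powr (- (real n * t))"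
proof -
  have e: "real n * info_rate P n s = - log 2 (P s)" unfolding info_rate_def using assms by (simp add: log_divide)
  have "t \<le> info_rate P n s \<longleftrightarrow> log 2 (P s) \<le> - (real n * t)"
    using e assms by (smt (verit, best) mult_le_cancel_left_pos of_nat_0_less_iff)
  also have "\<dots> \<longleftrightarrow> P s \<le> 2 powr (- (real n * t))" by (rule log_le_iff) (use assms in auto)
  finally show ?thesis .
qed

lemma info_le_iff:
  assumes "0 < P s" "0 < n"
  shows "info_rate P n s \<le> t \<longleftrightarrow> 2 powr (- (real n * t)) \<le> P s"
proof -
  have e: "real n * info_rate P n s = - log 2 (P s)" unfolding info_rate_def using assms by (simp add: log_divide)
  have "info_rate P n s \<le> t \<longleftrightarrow> - (real n * t) \<le> log 2 (P s)"
    using e assms by (smt (verit, best) mult_le_cancel_left_pos of_nat_0_less_iff)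
  also have "\<dots> \<longleftrightarrow> 2 powr (- (real n * t)) \<le> P s" by (rule le_log_iff) (use assms in auto)
  finally show ?thesis .
qed

lemma prob_len_nonneg: "process P \<Longrightarrow> 0 \<le> prob_len P n A"
  unfolding prob_len_def by (rule sum_nonneg) (simp add: proc_nonneg)

lemma prob_len_mono: "process P \<Longrightarrow> (\<And>s. A s \<Longrightarrow> B s) \<Longrightarrow> prob_len P n A \<le> prob_len P n B"
  unfolding prob_len_def by (rule sum_mono2) (auto simp: finite_len proc_nonneg)

lemma prob_len_le1: "process P \<Longrightarrow> prob_len P n A \<le> 1"
proof -
  assume P: "process P"
  have "prob_len P n A \<le> prob_len P n (\<lambda>_. True)" by (rule prob_len_mono[OF P]) simp
  also have "\<dots> = 1" unfolding prob_len_def using sum_len_one[OF P] by simp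
  finally show ?thesis .
qed

lemma prob_len_compl: "process P \<Longrightarrow> prob_len P n A + prob_len P n (\<lambda>s. \<not> A s) = 1"
proof -
  assume P: "process P"
  have "prob_len P n A + prob_len P n (\<lambda>s. \<not> A s) = (\<Sum>x | length x = n. P x)"
    unfolding prob_len_def
    by (subst sum.union_disjoint[symmetric]) (auto simp: finite_len intro!: sum.cong)
  then show ?thesis using sum_len_one[OF P] by simp
qed

lemma prob_ge_le_sum:
  assumes P: "process P" and n: "0 < n"
  shows "prob_len P n (\<lambda>s. t \<le> info_rate P n s) \<le> (\<Sum>y | length y = n \<and> P y \<le> 2 powr (- (real n * t)). P y)"
  unfolding prob_len_def
proof -
  let ?A = "{s. length s = n \<and> t \<le> info_rate P n s}"
  let ?B = "{y. length y = n \<and> P y \<le> 2 powr (- (real n * t))}"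
  have "(\<Sum>s\<in>?A. P s) = (\<Sum>s\<in>?A \<inter> {s. 0 < P s}. P s)"
    by (rule sum.mono_neutral_right) (auto simp: finite_len less_le proc_nonneg[OF P])
  also have "\<dots> \<le> (\<Sum>s\<in>?B. P s)"
  proof (rule sum_mono2)
    show "?A \<inter> {s. 0 < P s} \<subseteq> ?B" using info_ge_iff[OF _ n] by auto
  qed (auto simp: finite_len proc_nonneg[OF P])
  finally show "(\<Sum>s\<in>?A. P s) \<le> (\<Sum>s\<in>?B. P s)" .
qed

lemma prob_le_le_sum:
  assumes P: "process P" and n: "0 < n"
  shows "prob_len P n (\<lambda>s. info_rate P n s \<le> t) \<le> (\<Sum>y | length y = n \<and> 2 powr (- (real n * t)) \<le> P y. P y)"
  unfolding prob_len_def
proof -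
  let ?A = "{s. length s = n \<and> info_rate P n s \<le> t}"
  let ?B = "{y. length y = n \<and> 2 powr (- (real n * t)) \<le> P y}"
  have "(\<Sum>s\<in>?A. P s) = (\<Sum>s\<in>?A \<inter> {s. 0 < P s}. P s)"
    by (rule sum.mono_neutral_right) (auto simp: finite_len less_le proc_nonneg[OF P])
  also have "\<dots> \<le> (\<Sum>s\<in>?B. P s)"
  proof (rule sum_mono2)
    show "?A \<inter> {s. 0 < P s} \<subseteq> ?B" using info_le_iff[OF _ n] by auto
  qed (auto simp: finite_len proc_nonneg[OF P])
  finally show "(\<Sum>s\<in>?A. P s) \<le> (\<Sum>s\<in>?B. P s)" .
qed

lemma sum_lt_le_prob_ge:
  assumes P: "process P" and n: "0 < n"
  shows "(\<Sum>y | length y = n \<and> P y < 2 powr (- (real n * t)). P y) \<le> prob_len P n (\<lambda>s. t \<le> info_rate P n s)"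
  unfolding prob_len_def
proof -
  let ?A = "{s. length s = n \<and> t \<le> info_rate P n s}"
  let ?B = "{y. length y = n \<and> P y < 2 powr (- (real n * t))}"
  have "(\<Sum>s\<in>?B. P s) = (\<Sum>s\<in>?B \<inter> {s. 0 < P s}. P s)"
    by (rule sum.mono_neutral_right) (auto simp: finite_len less_le proc_nonneg[OF P])
  also have "\<dots> \<le> (\<Sum>s\<in>?A. P s)"
  proof (rule sum_mono2)
    show "?B \<inter> {s. 0 < P s} \<subseteq> ?A" using info_ge_iff[OF _ n] by fastforce
  qed (auto simp: finite_len proc_nonneg[OF P])
  finally show "(\<Sum>s\<in>?B. P s) \<le> (\<Sum>s\<in>?A. P s)" .
qed

lemma sum_gt_le_prob_le:
  assumes P: "process P" and n: "0 < n"
  shows "(\<Sum>y | length y = n \<and> 2 powr (- (real n * t)) < P y. P y) \<le> prob_len P n (\<lambda>s. info_rate P n s \<le> t)"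
  unfolding prob_len_def
proof -
  let ?A = "{s. length s = n \<and> info_rate P n s \<le> t}"
  let ?B = "{y. length y = n \<and> 2 powr (- (real n * t)) < P y}"
  have "?B \<subseteq> ?A"
  proof
    fix y assume y: "y \<in> ?B"
    have "0 < P y" using y by (smt (verit) mem_Collect_eq powr_gt_zero)
    then show "y \<in> ?A" using y info_le_iff[OF _ n, of P y t] by simp
  qed
  then show "(\<Sum>s\<in>?B. P s) \<le> (\<Sum>s\<in>?A. P s)"
    by (intro sum_mono2) (auto simp: finite_len proc_nonneg[OF P])
qed

lemma card_big:
  assumes P: "process P" and d: "0 < d"
  shows "real (card {x. length x = m \<and> d \<le> P x}) * d \<le> 1"
proof -
  let ?G = "{x. length x = m \<and> d \<le> P x}"
  have "real (card ?G) * d = (\<Sum>x\<in>?G. d)" by simp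
  also have "\<dots> \<le> (\<Sum>x\<in>?G. P x)" by (rule sum_mono) simp
  also have "\<dots> \<le> (\<Sum>x | length x = m. P x)"
    by (rule sum_mono2) (auto simp: finite_len0 proc_nonneg[OF P])
  finally show ?thesis using sum_len_one[OF P] by simp
qed

definition SUPset :: "('a::finite list \<Rightarrow> real) \<Rightarrow> real set" where
  "SUPset P = {t. (\<lambda>n. prob_len P n (\<lambda>s. t \<le> info_rate P n s)) \<longlonglongrightarrow> 0}"
definition INFset :: "('a::finite list \<Rightarrow> real) \<Rightarrow> real set" where
  "INFset P = {t. (\<lambda>n. prob_len P n (\<lambda>s. info_rate P n s \<le> t)) \<longlonglongrightarrow> 0}"

lemma sup_ent_eq: "sup_ent P = Inf (SUPset P)" unfolding sup_ent_def SUPset_def by simp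
lemma inf_ent_eq: "inf_ent P = Sup (INFset P)" unfolding inf_ent_def INFset_def by simp

lemma prob_all: "process P \<Longrightarrow> prob_len P n (\<lambda>s. True) = 1"
  unfolding prob_len_def using sum_len_one by simp

lemma SUP_pos: assumes P: "process P" and t: "t \<in> SUPset P" shows "0 < t"
proof (rule ccontr)
  assume "\<not> 0 < t"
  then have "prob_len P n (\<lambda>s. t \<le> info_rate P n s) = 1" for n
    using prob_all[OF P, of n] info_nonneg[OF P, of n] unfolding prob_len_def
    by (smt (verit, ccfv_SIG) Collect_cong)
  then have "(\<lambda>n. 1::real) \<longlonglongrightarrow> 0" using t unfolding SUPset_def by simp
  then show False using LIMSEQ_unique[OF tendsto_const] by fastforce
qed

lemma SUP_up: assumes P: "process P" and t: "t \<in> SUPset P" and tt: "t \<le> t'" shows "t' \<in> SUPset P"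
proof -
  have "(\<lambda>n. prob_len P n (\<lambda>s. t' \<le> info_rate P n s)) \<longlonglongrightarrow> 0"
  proof (rule real_tendsto_sandwich[OF _ _ tendsto_const])
    show "(\<lambda>n. prob_len P n (\<lambda>s. t \<le> info_rate P n s)) \<longlonglongrightarrow> 0" using t unfolding SUPset_def by simp
    show "\<forall>\<^sub>F n in sequentially. 0 \<le> prob_len P n (\<lambda>s. t' \<le> info_rate P n s)"
      by (simp add: prob_len_nonneg[OF P])
    show "\<forall>\<^sub>F n in sequentially. prob_len P n (\<lambda>s. t' \<le> info_rate P n s) \<le> prob_len P n (\<lambda>s. t \<le> info_rate P n s)"
      using tt by (intro always_eventually allI prob_len_mono[OF P]) simp
  qed
  then show ?thesis unfolding SUPset_def by simp
qed

lemma INF_down: assumes P: "process P" and t: "t \<in> INFset P" and tt: "t' \<le> t" shows "t' \<in> INFset P"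
proof -
  have "(\<lambda>n. prob_len P n (\<lambda>s. info_rate P n s \<le> t')) \<longlonglongrightarrow> 0"
  proof (rule real_tendsto_sandwich[OF _ _ tendsto_const])
    show "(\<lambda>n. prob_len P n (\<lambda>s. info_rate P n s \<le> t)) \<longlonglongrightarrow> 0" using t unfolding INFset_def by simp
    show "\<forall>\<^sub>F n in sequentially. 0 \<le> prob_len P n (\<lambda>s. info_rate P n s \<le> t')"
      by (simp add: prob_len_nonneg[OF P])
    show "\<forall>\<^sub>F n in sequentially. prob_len P n (\<lambda>s. info_rate P n s \<le> t') \<le> prob_len P n (\<lambda>s. info_rate P n s \<le> t)"
      using tt by (intro always_eventually allI prob_len_mono[OF P]) simp
  qed
  then show ?thesis unfolding INFset_def by simp
qed

lemma INF_ne: assumes P: "process P" shows "-1 \<in> INFset P"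
proof -
  have "prob_len P n (\<lambda>s. info_rate P n s \<le> -1) = 0" for n
  proof -
    have "{s. length s = n \<and> info_rate P n s \<le> -1} = {}" using info_nonneg[OF P, of n]
      by (smt (verit) Collect_empty_eq)
    then show ?thesis unfolding prob_len_def by (metis sum.empty)
  qed
  then show ?thesis unfolding INFset_def by simp
qed

lemma INF_lt_SUP: assumes P: "process P" and t: "t \<in> INFset P" and t': "t' \<in> SUPset P" shows "t < t'"
proof (rule ccontr)
  assume "\<not> t < t'"
  then have le: "t' \<le> t" by simp
  have "1 \<le> prob_len P n (\<lambda>s. t' \<le> info_rate P n s) + prob_len P n (\<lambda>s. info_rate P n s \<le> t)" for n
  proof -
    have "prob_len P n (\<lambda>s. \<not> info_rate P n s \<le> t) \<le> prob_len P n (\<lambda>s. t' \<le> info_rate P n s)"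
      by (rule prob_len_mono[OF P]) (use le in auto)
    then show ?thesis using prob_len_compl[OF P, of n "\<lambda>s. info_rate P n s \<le> t"] by simp
  qed
  moreover have "(\<lambda>n. prob_len P n (\<lambda>s. t' \<le> info_rate P n s) + prob_len P n (\<lambda>s. info_rate P n s \<le> t)) \<longlonglongrightarrow> 0 + 0"
    by (rule tendsto_add) (use t t' in \<open>auto simp: INFset_def SUPset_def\<close>)
  ultimately have "1 \<le> (0::real) + 0" by (intro LIMSEQ_le_const) auto
  then show False by simp
qed

lemma SUP_ne:
  assumes P: "process (P :: 'a::finite list \<Rightarrow> real)"
  shows "log 2 (real CARD('a)) + 1 \<in> SUPset P"
proof -
  define M where "M = real CARD('a)"
  have M: "0 < M" unfolding M_def by simp
  define t where "t = log 2 M + 1"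
  have bnd: "prob_len P n (\<lambda>s. t \<le> info_rate P n s) \<le> (1/2) ^ n" if n: "0 < n" for n
  proof -
    have "prob_len P n (\<lambda>s. t \<le> info_rate P n s) \<le> (\<Sum>y | length y = n \<and> P y \<le> 2 powr (- (real n * t)). P y)"
      by (rule prob_ge_le_sum[OF P n])
    also have "\<dots> \<le> (\<Sum>y | length y = n \<and> P y \<le> 2 powr (- (real n * t)). 2 powr (- (real n * t)))"
      by (rule sum_mono) simp
    also have "\<dots> \<le> (\<Sum>y::'a list | length y = n. 2 powr (- (real n * t)))"
      by (rule sum_mono2) (auto simp: finite_len0)
    also have "\<dots> = M ^ n * 2 powr (- (real n * t))"
    proof -
      have "card {y::'a list. length y = n} = CARD('a) ^ n"
        using card_lists_length_eq[of "UNIV::'a set" n] by simp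
      then show ?thesis unfolding M_def by simp
    qed
    also have "\<dots> = (1/2) ^ n"
    proof -
      have "M ^ n = M powr real n" using M by (simp add: powr_realpow)
      also have "\<dots> = (2 powr log 2 M) powr real n" using M by simp
      also have "\<dots> = 2 powr (real n * log 2 M)" by (simp add: powr_powr mult.commute)
      finally have "M ^ n = 2 powr (real n * log 2 M)" .
      then have "M ^ n * 2 powr (- (real n * t)) = 2 powr (real n * log 2 M + - (real n * t))"
        by (simp add: powr_add[symmetric])
      also have "real n * log 2 M + - (real n * t) = - real n" unfolding t_def by (simp add: algebra_simps)
      also have "2 powr (- real n) = (1/2) ^ n" by (simp add: powr_minus powr_realpow power_one_over inverse_eq_divide)
      finally show ?thesis .
    qed
    finally show ?thesis .
  qed
  have "(\<lambda>n. prob_len P n (\<lambda>s. t \<le> info_rate P n s)) \<longlonglongrightarrow> 0"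
  proof (rule real_tendsto_sandwich[OF _ _ tendsto_const])
    show "(\<lambda>n. (1/2::real) ^ n) \<longlonglongrightarrow> 0" by (rule LIMSEQ_power_zero) simp
    show "\<forall>\<^sub>F n in sequentially. 0 \<le> prob_len P n (\<lambda>s. t \<le> info_rate P n s)"
      by (simp add: prob_len_nonneg[OF P])
    show "\<forall>\<^sub>F n in sequentially. prob_len P n (\<lambda>s. t \<le> info_rate P n s) \<le> (1/2) ^ n"
      using bnd by (intro eventually_sequentiallyI[of 1]) simp
  qed
  then show ?thesis unfolding SUPset_def t_def M_def by simp
qed

lemma SUP_bdd: "process P \<Longrightarrow> bdd_below (SUPset P)"
  by (rule bdd_belowI[of _ 0]) (auto dest: SUP_pos less_imp_le)

lemma SUP_nonempty: "process P \<Longrightarrow> SUPset P \<noteq> {}"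
  using SUP_ne by blast

lemma INF_nonempty: "process P \<Longrightarrow> INFset P \<noteq> {}"
  using INF_ne by blast

lemma INF_bdd: assumes P: "process P" shows "bdd_above (INFset P)"
proof -
  obtain t' where "t' \<in> SUPset P" using SUP_nonempty[OF P] by blast
  then show ?thesis by (intro bdd_aboveI[of _ t']) (auto dest: INF_lt_SUP[OF P] less_imp_le)
qed

lemma D1: assumes P: "process P" and g: "0 < g" shows "sup_ent P + g \<in> SUPset P"
proof -
  have "Inf (SUPset P) < Inf (SUPset P) + g" using g by simp
  then obtain x where "x \<in> SUPset P" "x < Inf (SUPset P) + g"
    using cInf_less_iff[OF SUP_nonempty[OF P] SUP_bdd[OF P]] by blast
  then show ?thesis unfolding sup_ent_eq using SUP_up[OF P] by (meson less_imp_le)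
qed

lemma D2: assumes P: "process P" and t: "t < sup_ent P" shows "t \<notin> SUPset P"
  using cInf_lower[OF _ SUP_bdd[OF P], of t] t unfolding sup_ent_eq by fastforce

lemma D3: assumes P: "process P" and t: "t < inf_ent P" shows "t \<in> INFset P"
proof -
  obtain x where "x \<in> INFset P" "t < x"
    using less_cSup_iff[OF INF_nonempty[OF P] INF_bdd[OF P]] t unfolding inf_ent_eq by blast
  then show ?thesis using INF_down[OF P] by (meson less_imp_le)
qed

lemma D4: assumes P: "process P" and t: "inf_ent P < t" shows "t \<notin> INFset P"
  using cSup_upper[OF _ INF_bdd[OF P], of t] t unfolding inf_ent_eq by fastforce

lemma D5: assumes P: "process P" shows "inf_ent P \<le> sup_ent P"
  unfolding inf_ent_eq sup_ent_eq
proof (rule cSup_least[OF INF_nonempty[OF P]])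
  fix t assume t: "t \<in> INFset P"
  show "t \<le> Inf (SUPset P)"
    by (rule cInf_greatest[OF SUP_nonempty[OF P]]) (use INF_lt_SUP[OF P t] in \<open>auto intro: less_imp_le\<close>)
qed

lemma sup_ent_nonneg: assumes P: "process P" shows "0 \<le> sup_ent P"
  unfolding sup_ent_eq
  by (rule cInf_greatest[OF SUP_nonempty[OF P]]) (auto dest: SUP_pos[OF P] less_imp_le)




lemma lim_comp:
  assumes f: "f \<longlonglongrightarrow> (L::real)" and g: "\<And>Z. \<exists>N. \<forall>n\<ge>N. Z \<le> g n"
  shows "(\<lambda>n. f (g n)) \<longlonglongrightarrow> L"
proof -
  have "filterlim g sequentially sequentially"
    unfolding filterlim_at_top eventually_sequentially using g by blast
  then show ?thesis using filterlim_compose[OF f] by blast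
qed

lemma exp_lim: assumes c: "0 < c" shows "(\<lambda>n. 2 powr (- (real n * c))) \<longlonglongrightarrow> 0"
proof -
  have eq: "2 powr (- (real n * c)) = (2 powr (-c)) ^ n" for n
    by (simp add: powr_realpow[symmetric] powr_powr mult.commute)
  have "2 powr (-c) < 2 powr 0" using c by (intro powr_less_mono) auto
  then have "2 powr (-c) < 1" by simp
  moreover have "0 \<le> 2 powr (-c)" by simp
  ultimately have "(\<lambda>n. (2 powr (-c)) ^ n) \<longlonglongrightarrow> 0" by (intro LIMSEQ_power_zero) simp
  then show ?thesis unfolding eq .
qed

lemma floor_mult_big:
  assumes R: "0 < R" shows "\<exists>N. \<forall>n\<ge>N. Z \<le> nat \<lfloor>real n * R\<rfloor>"
proof (intro exI allI impI)
  fix n assume n: "nat \<lceil>(real Z + 1) / R\<rceil> \<le> n"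
  then have "(real Z + 1) / R \<le> real n" by linarith
  then have "real Z + 1 \<le> real n * R" using R by (simp add: field_simps)
  then show "Z \<le> nat \<lfloor>real n * R\<rfloor>" by linarith
qed

lemma floor_div_big:
  assumes R: "0 < R" shows "\<exists>N. \<forall>m\<ge>N. Z \<le> nat \<lfloor>real m / R\<rfloor>"
proof -
  obtain N where "\<forall>n\<ge>N. Z \<le> nat \<lfloor>real n * (1/R)\<rfloor>" using floor_mult_big[of "1/R" Z] R by auto
  then show ?thesis by auto
qed

lemma card_pow_bound:
  assumes PX: "process PX" and G: "G = {x. length x = m \<and> 2 powr (- (real m * b)) \<le> PX x}"
    and c: "real m * b - real n * a \<le> - c"
  shows "real (card G) * 2 powr (- (real n * a)) \<le> 2 powr (- c)"
proof -
  have cG: "real (card G) * 2 powr (- (real m * b)) \<le> 1"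
    unfolding G by (rule card_big[OF PX]) simp
  have "real (card G) \<le> 2 powr (real m * b)"
  proof -
    have "real (card G) = real (card G) * 2 powr (- (real m * b)) * 2 powr (real m * b)"
      by (simp add: powr_minus)
    also have "\<dots> \<le> 1 * 2 powr (real m * b)" by (rule mult_right_mono[OF cG]) simp
    finally show ?thesis by simp
  qed
  then have "real (card G) * 2 powr (- (real n * a)) \<le> 2 powr (real m * b) * 2 powr (- (real n * a))"
    by (rule mult_right_mono) simp
  also have "\<dots> = 2 powr (real m * b - real n * a)" by (simp add: powr_add[symmetric])
  also have "\<dots> \<le> 2 powr (- c)" using c by simp
  finally show ?thesis .
qed

lemma conv_a:
  fixes PX :: "'a::finite list \<Rightarrow> real" and PY :: "'b::finite list \<Rightarrow> real"
  assumes PX: "process PX" and PY: "process PY"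
    and V: "\<And>n. 1 \<le> n \<Longrightarrow> valid_alg PX PY n (\<phi>s n)"
    and R: "0 < R"
    and lim: "(\<lambda>n. prob_T_gt PX (\<phi>s n) (real n * R)) \<longlonglongrightarrow> 0"
  shows "sup_ent PY \<le> R * sup_ent PX"
proof (rule ccontr)
  assume neg: "\<not> ?thesis"
  define d where "d = sup_ent PY - R * sup_ent PX"
  have d: "0 < d" using neg unfolding d_def by simp
  define g where "g = d / (2 * (R + 1))"
  have g: "0 < g" using d R unfolding g_def by simp
  define b where "b = sup_ent PX + g"
  define a where "a = R * b + g"
  have b0: "0 < b" using sup_ent_nonneg[OF PX] g unfolding b_def by simp
  have bS: "b \<in> SUPset PX" unfolding b_def by (rule D1[OF PX g])
  have a1: "a = R * sup_ent PX + (R + 1) * g" unfolding a_def b_def by (simp add: algebra_simps)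
  have a2: "(R + 1) * g = d / 2" unfolding g_def using R by (simp add: field_simps)
  have aH: "a < sup_ent PY" using a1 a2 d d_def by linarith
  define m where "m n = nat \<lfloor>real n * R\<rfloor>" for n
  have mle: "real (m n) \<le> real n * R" for n
  proof -
    have "0 \<le> \<lfloor>real n * R\<rfloor>" using R by simp
    then have "real (m n) = of_int \<lfloor>real n * R\<rfloor>" unfolding m_def by simp
    then show ?thesis by simp
  qed
  have key: "prob_len PY n (\<lambda>s. a \<le> info_rate PY n s) \<le> prob_T_gt PX (\<phi>s n) (real n * R)
      + prob_len PX (m n) (\<lambda>s. b \<le> info_rate PX (m n) s) + 2 powr (- (real n * g))"
    if n: "1 \<le> n" "0 < m n" for n
  proof -
    define G where "G = {x. length x = m n \<and> 2 powr (- (real (m n) * b)) \<le> PX x}"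
    define S where "S = {y. length y = n \<and> PY y \<le> 2 powr (- (real n * a))}"
    have "prob_len PY n (\<lambda>s. a \<le> info_rate PY n s) \<le> (\<Sum>y\<in>S. PY y)"
      unfolding S_def by (rule prob_ge_le_sum[OF PY]) (use n in simp)
    also have "\<dots> \<le> (\<Sum>u\<in>Ushort (\<phi>s n) (m n). PX u) + (\<Sum>x | length x = m n \<and> x \<notin> G. PX x)
        + real (card G) * 2 powr (- (real n * a))"
      by (rule bound_Y[OF PX V[OF n(1)] order_refl]) (auto simp: S_def G_def)
    also have "(\<Sum>u\<in>Ushort (\<phi>s n) (m n). PX u) = prob_T_gt PX (\<phi>s n) (real n * R)"
      unfolding prob_T_gt_eq m_def ..
    also have "(\<Sum>x | length x = m n \<and> x \<notin> G. PX x) \<le> prob_len PX (m n) (\<lambda>s. b \<le> info_rate PX (m n) s)"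
    proof -
      have "{x. length x = m n \<and> x \<notin> G} = {x. length x = m n \<and> PX x < 2 powr (- (real (m n) * b))}"
        unfolding G_def by auto
      then show ?thesis using sum_lt_le_prob_ge[OF PX n(2), of b] by simp
    qed
    also have "real (card G) * 2 powr (- (real n * a)) \<le> 2 powr (- (real n * g))"
    proof (rule card_pow_bound[OF PX G_def])
      have "real (m n) * b \<le> real n * R * b" using mle b0 by (simp add: mult_right_mono)
      then show "real (m n) * b - real n * a \<le> - (real n * g)" unfolding a_def by (simp add: algebra_simps)
    qed
    finally show ?thesis by simp
  qed
  obtain N where N: "\<forall>n\<ge>N. 1 \<le> m n" using floor_mult_big[OF R, of 1] unfolding m_def by blast
  have "(\<lambda>n. prob_len PY n (\<lambda>s. a \<le> info_rate PY n s)) \<longlonglongrightarrow> 0"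
  proof (rule real_tendsto_sandwich[OF _ _ tendsto_const])
    show "\<forall>\<^sub>F n in sequentially. 0 \<le> prob_len PY n (\<lambda>s. a \<le> info_rate PY n s)"
      by (simp add: prob_len_nonneg[OF PY])
    show "\<forall>\<^sub>F n in sequentially. prob_len PY n (\<lambda>s. a \<le> info_rate PY n s) \<le> prob_T_gt PX (\<phi>s n) (real n * R)
      + prob_len PX (m n) (\<lambda>s. b \<le> info_rate PX (m n) s) + 2 powr (- (real n * g))"
    proof (rule eventually_sequentiallyI[of "max 1 N"])
      fix n assume nn: "max 1 N \<le> n"
      then have n1: "1 \<le> n" and n2: "0 < m n" using N by auto
      show "prob_len PY n (\<lambda>s. a \<le> info_rate PY n s) \<le> prob_T_gt PX (\<phi>s n) (real n * R)
      + prob_len PX (m n) (\<lambda>s. b \<le> info_rate PX (m n) s) + 2 powr (- (real n * g))"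
        by (rule key[OF n1 n2])
    qed
    have l2: "(\<lambda>n. prob_len PX (m n) (\<lambda>s. b \<le> info_rate PX (m n) s)) \<longlonglongrightarrow> 0"
    proof (rule lim_comp[where f="\<lambda>k. prob_len PX k (\<lambda>s. b \<le> info_rate PX k s)"])
      show "(\<lambda>k. prob_len PX k (\<lambda>s. b \<le> info_rate PX k s)) \<longlonglongrightarrow> 0" using bS unfolding SUPset_def by simp
      show "\<exists>N. \<forall>n\<ge>N. Z \<le> m n" for Z unfolding m_def by (rule floor_mult_big[OF R])
    qed
    show "(\<lambda>n. prob_T_gt PX (\<phi>s n) (real n * R)
      + prob_len PX (m n) (\<lambda>s. b \<le> info_rate PX (m n) s) + 2 powr (- (real n * g))) \<longlonglongrightarrow> 0"
      using tendsto_add[OF tendsto_add[OF lim l2] exp_lim[OF g]] by simp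
  qed
  then have "a \<in> SUPset PY" unfolding SUPset_def by simp
  then show False using D2[OF PY aH] by simp
qed

lemma conv_b:
  fixes PX :: "'a::finite list \<Rightarrow> real" and PY :: "'b::finite list \<Rightarrow> real"
  assumes PX: "process PX" and PY: "process PY"
    and V: "\<And>n. 1 \<le> n \<Longrightarrow> valid_alg PX PY n (\<phi>s n)"
    and R: "0 < R"
    and lim: "(\<lambda>n. prob_T_gt PX (\<phi>s n) (real n * R)) \<longlonglongrightarrow> 0"
    and hx: "0 < inf_ent PX"
  shows "inf_ent PY \<le> R * inf_ent PX"
proof (rule ccontr)
  assume neg: "\<not> ?thesis"
  define d where "d = inf_ent PY - R * inf_ent PX"
  have d: "0 < d" using neg unfolding d_def by simp
  define g where "g = d / (2 * (R + 1))"
  have g: "0 < g" using d R unfolding g_def by simp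
  define b where "b = inf_ent PX + g"
  define a where "a = R * b + g"
  have b0: "0 < b" using hx g unfolding b_def by simp
  have a0: "0 < a" using b0 R g unfolding a_def by (simp add: add_pos_pos)
  have bI: "b \<notin> INFset PX" by (rule D4[OF PX]) (use g in \<open>simp add: b_def\<close>)
  have a1: "a = R * inf_ent PX + (R + 1) * g" unfolding a_def b_def by (simp add: algebra_simps)
  have a2: "(R + 1) * g = d / 2" unfolding g_def using R by (simp add: field_simps)
  have aH: "a < inf_ent PY" using a1 a2 d d_def by linarith
  have aI: "a \<in> INFset PY" by (rule D3[OF PY aH])
  have aR: "a / R = b + g / R" unfolding a_def using R by (simp add: field_simps)
  define n where "n m = nat \<lfloor>real m / R\<rfloor>" for m
  define k where "k m = nat \<lfloor>real (n m) * R\<rfloor>" for m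
  have nle: "real (n m) * R \<le> real m" for m
  proof -
    have "0 \<le> \<lfloor>real m / R\<rfloor>" using R by simp
    then have "real (n m) = of_int \<lfloor>real m / R\<rfloor>" unfolding n_def by simp
    then have "real (n m) \<le> real m / R" by simp
    then show ?thesis using R by (simp add: field_simps)
  qed
  have nge: "real m / R - 1 \<le> real (n m)" for m
  proof -
    have "0 \<le> \<lfloor>real m / R\<rfloor>" using R by simp
    then have "real (n m) = of_int \<lfloor>real m / R\<rfloor>" unfolding n_def by simp
    then show ?thesis by linarith
  qed
  have km: "k m \<le> m" for m
  proof -
    have "\<lfloor>real (n m) * R\<rfloor> \<le> int m" using nle[of m] by linarith
    then show ?thesis unfolding k_def by simp
  qed
  have key: "prob_len PX m (\<lambda>s. info_rate PX m s \<le> b) \<le> prob_T_gt PX (\<phi>s (n m)) (real (n m) * R)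
      + prob_len PY (n m) (\<lambda>s. info_rate PY (n m) s \<le> a) + 2 powr a * 2 powr (- (real m * (g / R)))"
    if m: "1 \<le> m" "1 \<le> n m" for m
  proof -
    define G where "G = {x. length x = m \<and> 2 powr (- (real m * b)) \<le> PX x}"
    define S where "S = {y. length y = n m \<and> PY y \<le> 2 powr (- (real (n m) * a))}"
    have "prob_len PX m (\<lambda>s. info_rate PX m s \<le> b) \<le> (\<Sum>x\<in>G. PX x)"
      unfolding G_def by (rule prob_le_le_sum[OF PX]) (use m in simp)
    also have "\<dots> \<le> (\<Sum>u\<in>Ushort (\<phi>s (n m)) (k m). PX u) + (\<Sum>y | length y = n m \<and> y \<notin> S. PY y)
        + real (card G) * 2 powr (- (real (n m) * a))"
      by (rule bound_X[OF PX V[OF m(2)] km]) (auto simp: S_def G_def)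
    also have "(\<Sum>u\<in>Ushort (\<phi>s (n m)) (k m). PX u) = prob_T_gt PX (\<phi>s (n m)) (real (n m) * R)"
      unfolding prob_T_gt_eq k_def ..
    also have "(\<Sum>y | length y = n m \<and> y \<notin> S. PY y) \<le> prob_len PY (n m) (\<lambda>s. info_rate PY (n m) s \<le> a)"
    proof -
      have "{y. length y = n m \<and> y \<notin> S} = {y. length y = n m \<and> 2 powr (- (real (n m) * a)) < PY y}"
        unfolding S_def by auto
      then show ?thesis using sum_gt_le_prob_le[OF PY, of "n m" a] m(2) by simp
    qed
    also have "real (card G) * 2 powr (- (real (n m) * a)) \<le> 2 powr (- (real m * (g / R) - a))"
    proof (rule card_pow_bound[OF PX G_def])
      have "(real m / R - 1) * a \<le> real (n m) * a" using nge[of m] a0 by (simp add: mult_right_mono)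
      moreover have "(real m / R - 1) * a = real m * (a / R) - a" by (simp add: algebra_simps)
      ultimately have "real m * (a / R) - a \<le> real (n m) * a" by simp
      then show "real m * b - real (n m) * a \<le> - (real m * (g / R) - a)"
        unfolding aR by (simp add: algebra_simps)
    qed
    also have "2 powr (- (real m * (g / R) - a)) = 2 powr a * 2 powr (- (real m * (g / R)))"
      by (simp add: powr_add[symmetric])
    finally show ?thesis by simp
  qed
  obtain N where N: "\<forall>m\<ge>N. 1 \<le> n m" using floor_div_big[OF R, of 1] unfolding n_def by blast
  have "(\<lambda>m. prob_len PX m (\<lambda>s. info_rate PX m s \<le> b)) \<longlonglongrightarrow> 0"
  proof (rule real_tendsto_sandwich[OF _ _ tendsto_const])
    show "\<forall>\<^sub>F m in sequentially. 0 \<le> prob_len PX m (\<lambda>s. info_rate PX m s \<le> b)"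
      by (simp add: prob_len_nonneg[OF PX])
    show "\<forall>\<^sub>F m in sequentially. prob_len PX m (\<lambda>s. info_rate PX m s \<le> b) \<le> prob_T_gt PX (\<phi>s (n m)) (real (n m) * R)
      + prob_len PY (n m) (\<lambda>s. info_rate PY (n m) s \<le> a) + 2 powr a * 2 powr (- (real m * (g / R)))"
    proof (rule eventually_sequentiallyI[of "max 1 N"])
      fix m assume mm: "max 1 N \<le> m"
      then have m1: "1 \<le> m" and m2: "1 \<le> n m" using N by auto
      show "prob_len PX m (\<lambda>s. info_rate PX m s \<le> b) \<le> prob_T_gt PX (\<phi>s (n m)) (real (n m) * R)
      + prob_len PY (n m) (\<lambda>s. info_rate PY (n m) s \<le> a) + 2 powr a * 2 powr (- (real m * (g / R)))"
        by (rule key[OF m1 m2])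
    qed
    have nbig: "\<exists>N. \<forall>m\<ge>N. Z \<le> n m" for Z unfolding n_def by (rule floor_div_big[OF R])
    have l1: "(\<lambda>m. prob_T_gt PX (\<phi>s (n m)) (real (n m) * R)) \<longlonglongrightarrow> 0"
      by (rule lim_comp[where f="\<lambda>n. prob_T_gt PX (\<phi>s n) (real n * R)", OF lim nbig])
    have l2: "(\<lambda>m. prob_len PY (n m) (\<lambda>s. info_rate PY (n m) s \<le> a)) \<longlonglongrightarrow> 0"
    proof (rule lim_comp[where f="\<lambda>k. prob_len PY k (\<lambda>s. info_rate PY k s \<le> a)", OF _ nbig])
      show "(\<lambda>k. prob_len PY k (\<lambda>s. info_rate PY k s \<le> a)) \<longlonglongrightarrow> 0" using aI unfolding INFset_def by simp
    qed
    have gR: "0 < g / R" using g R by simp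
    have l3: "(\<lambda>m. 2 powr a * 2 powr (- (real m * (g / R)))) \<longlonglongrightarrow> 0"
      using tendsto_mult_right_zero[OF exp_lim[OF gR], of "2 powr a"] by simp
    show "(\<lambda>m. prob_T_gt PX (\<phi>s (n m)) (real (n m) * R)
      + prob_len PY (n m) (\<lambda>s. info_rate PY (n m) s \<le> a) + 2 powr a * 2 powr (- (real m * (g / R)))) \<longlonglongrightarrow> 0"
      using tendsto_add[OF tendsto_add[OF l1 l2] l3] by simp
  qed
  then have "b \<in> INFset PX" unfolding INFset_def by simp
  then show False using bI by simp
qed

lemma Ushort_mono:
  assumes PX: "process PX" and kk: "k \<le> k'"
  shows "(\<Sum>u\<in>Ushort \<phi> k'. PX u) \<le> (\<Sum>u\<in>Ushort \<phi> k. PX u)"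
proof -
  have "(\<Sum>u\<in>Ushort \<phi> k'. PX u) \<le> (\<Sum>x | length x = k' \<and> take k x \<in> Ushort \<phi> k. PX x)"
  proof (rule sum_mono2)
    show "finite {x. length x = k' \<and> take k x \<in> Ushort \<phi> k}" by (rule finite_len)
    show "Ushort \<phi> k' \<subseteq> {x. length x = k' \<and> take k x \<in> Ushort \<phi> k}"
    proof
      fix u assume u: "u \<in> Ushort \<phi> k'"
      have "\<phi> (take i (take k u)) = None" if "i \<le> k" for i
        using u that kk unfolding Ushort_def by (simp add: min_def)
      moreover have "length (take k u) = k" using u kk unfolding Ushort_def by simp
      ultimately show "u \<in> {x. length x = k' \<and> take k x \<in> Ushort \<phi> k}" using u unfolding Ushort_def by simp
    qed
  qed (simp add: proc_nonneg[OF PX])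
  also have "\<dots> = (\<Sum>u\<in>Ushort \<phi> k. PX u)"
    by (rule ext_sum_set[OF PX _ kk]) (simp add: Ushort_def)
  finally show ?thesis .
qed

lemma achievable_mono:
  assumes PX: "process PX" and a: "achievable PX \<phi>s R" and RR: "R \<le> R'"
  shows "achievable PX \<phi>s R'"
proof -
  have R0: "0 \<le> R" using a unfolding achievable_def by simp
  have lim: "(\<lambda>n. prob_T_gt PX (\<phi>s n) (real n * R)) \<longlonglongrightarrow> 0" using a unfolding achievable_def by simp
  have "(\<lambda>n. prob_T_gt PX (\<phi>s n) (real n * R')) \<longlonglongrightarrow> 0"
  proof (rule real_tendsto_sandwich[OF _ _ tendsto_const lim])
    show "\<forall>\<^sub>F n in sequentially. 0 \<le> prob_T_gt PX (\<phi>s n) (real n * R')"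
      unfolding prob_T_gt_eq by (simp add: sum_nonneg proc_nonneg[OF PX])
    show "\<forall>\<^sub>F n in sequentially. prob_T_gt PX (\<phi>s n) (real n * R') \<le> prob_T_gt PX (\<phi>s n) (real n * R)"
    proof (intro always_eventually allI)
      fix n
      have "real n * R \<le> real n * R'" using RR by (simp add: mult_left_mono)
      then have "nat \<lfloor>real n * R\<rfloor> \<le> nat \<lfloor>real n * R'\<rfloor>" by (intro nat_mono floor_mono)
      then show "prob_T_gt PX (\<phi>s n) (real n * R') \<le> prob_T_gt PX (\<phi>s n) (real n * R)"
        unfolding prob_T_gt_eq by (rule Ushort_mono[OF PX])
    qed
  qed
  then show ?thesis unfolding achievable_def using R0 RR by simp
qed

lemma R_star_lower:
  fixes PX :: "'a::finite list \<Rightarrow> real" and PY :: "'b::finite list \<Rightarrow> real"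
  assumes PX: "process PX" and PY: "process PY" and hx: "0 < inf_ent PX"
  shows "R_star PX PY \<ge> ereal (max (sup_ent PY / sup_ent PX) (inf_ent PY / inf_ent PX))"
  unfolding R_star_def
proof (rule Inf_greatest)
  fix z assume "z \<in> {ereal R |R. \<exists>\<phi>s. (\<forall>n\<ge>1. valid_alg PX PY n (\<phi>s n)) \<and> achievable PX \<phi>s R}"
  then obtain R \<phi>s where z: "z = ereal R" and V: "\<And>n. 1 \<le> n \<Longrightarrow> valid_alg PX PY n (\<phi>s n)"
    and a: "achievable PX \<phi>s R" by blast
  have R0: "0 \<le> R" using a unfolding achievable_def by simp
  have hX: "0 < sup_ent PX" using D5[OF PX] hx by simp
  have b1: "sup_ent PY / sup_ent PX \<le> R + e" and b2: "inf_ent PY / inf_ent PX \<le> R + e" if e: "0 < e" for e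
  proof -
    have a': "achievable PX \<phi>s (R + e)" by (rule achievable_mono[OF PX a]) (use e in simp)
    have lim: "(\<lambda>n. prob_T_gt PX (\<phi>s n) (real n * (R + e))) \<longlonglongrightarrow> 0" using a' unfolding achievable_def by simp
    have Re: "0 < R + e" using R0 e by simp
    have "sup_ent PY \<le> (R + e) * sup_ent PX" by (rule conv_a[OF PX PY V Re lim])
    then show "sup_ent PY / sup_ent PX \<le> R + e" using hX by (simp add: divide_le_eq)
    have "inf_ent PY \<le> (R + e) * inf_ent PX" by (rule conv_b[OF PX PY V Re lim hx])
    then show "inf_ent PY / inf_ent PX \<le> R + e" using hx by (simp add: divide_le_eq)
  qed
  have "sup_ent PY / sup_ent PX \<le> R" by (rule field_le_epsilon) (rule b1)
  moreover have "inf_ent PY / inf_ent PX \<le> R" by (rule field_le_epsilon) (rule b2)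
  ultimately show "ereal (max (sup_ent PY / sup_ent PX) (inf_ent PY / inf_ent PX)) \<le> z"
    unfolding z by simp
qed




lemma interval_aux_snoc:
  "interval_aux P pre (lo, hi) (xs @ [x]) =
     (fst (interval_aux P pre (lo, hi) xs) + (snd (interval_aux P pre (lo, hi) xs) - fst (interval_aux P pre (lo, hi) xs)) * (\<Sum>k\<in>{k. k < x}. cond_prob P (pre @ xs) k),
      fst (interval_aux P pre (lo, hi) xs) + (snd (interval_aux P pre (lo, hi) xs) - fst (interval_aux P pre (lo, hi) xs)) * (\<Sum>k\<in>{k. k \<le> x}. cond_prob P (pre @ xs) k))"
proof (induction xs arbitrary: pre lo hi)
  case Nil
  then show ?case by simp
next
  case (Cons a xs)
  show ?case by (simp only: append_Cons interval_aux.simps Cons.IH) (simp)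
qed

definition lo where "lo P s = fst (ends P s)"
definition hi where "hi P s = snd (ends P s)"

lemma ends_nil: "lo P [] = 0" "hi P [] = 1"
  unfolding lo_def hi_def ends_def by simp_all

lemma ends_snoc:
  "lo P (s @ [x]) = lo P s + (hi P s - lo P s) * (\<Sum>k\<in>{k. k < x}. cond_prob P s k)"
  "hi P (s @ [x]) = lo P s + (hi P s - lo P s) * (\<Sum>k\<in>{k. k \<le> x}. cond_prob P s k)"
  unfolding lo_def hi_def ends_def by (simp_all add: interval_aux_snoc)

lemma interval_eq: "interval P s = {lo P s ..< hi P s}"
  unfolding interval_def lo_def hi_def ..

lemma cond_nonneg: "process P \<Longrightarrow> 0 \<le> cond_prob P s k"
  unfolding cond_prob_def by (simp add: proc_nonneg)

lemma child_le: "process P \<Longrightarrow> P (s @ [x]) \<le> P s"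
proof -
  assume P: "process P"
  have "P (s @ [x]) \<le> (\<Sum>a\<in>UNIV. P (s @ [a]))"
    by (rule member_le_sum) (simp_all add: proc_nonneg[OF P])
  then show ?thesis using proc_cons[OF P, of s] by simp
qed

lemma cond_sum_all: assumes P: "process P" and pos: "0 < P s" shows "(\<Sum>k\<in>UNIV. cond_prob P s k) = 1"
proof -
  have "(\<Sum>k\<in>UNIV. cond_prob P s k) = (\<Sum>k\<in>UNIV. P (s @ [k])) / P s"
    unfolding cond_prob_def by (simp add: sum_divide_distrib)
  also have "\<dots> = 1" using proc_cons[OF P, of s] pos by simp
  finally show ?thesis .
qed

lemma len_eq: assumes P: "process P" shows "hi P s - lo P s = P s"
proof (induction s rule: rev_induct)
  case Nil
  then show ?case using proc_nil[OF P] by (simp add: lo_def hi_def ends_def)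
next
  case (snoc x s)
  have ins: "{k. k \<le> x} = insert x {k. k < x}" by auto
  have "hi P (s @ [x]) - lo P (s @ [x]) = (hi P s - lo P s) * cond_prob P s x"
    unfolding ends_snoc ins by (simp add: sum.insert algebra_simps)
  also have "\<dots> = P s * cond_prob P s x" using snoc by simp
  also have "\<dots> = P (s @ [x])"
  proof (cases "P s = 0")
    case True
    then have "P (s @ [x]) = 0" using child_le[OF P, of s x] proc_nonneg[OF P, of "s @ [x]"] by simp
    then show ?thesis using True by simp
  next
    case False
    then show ?thesis unfolding cond_prob_def by simp
  qed
  finally show ?case .
qed

lemma lo_mono_snoc: assumes P: "process P" shows "lo P s \<le> lo P (s @ [x])"
proof -
  have "0 \<le> (hi P s - lo P s) * (\<Sum>k\<in>{k. k < x}. cond_prob P s k)"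
    using len_eq[OF P, of s] by (simp add: proc_nonneg[OF P] sum_nonneg cond_nonneg[OF P])
  then show ?thesis unfolding ends_snoc by simp
qed

lemma hi_mono_snoc: assumes P: "process P" shows "hi P (s @ [x]) \<le> hi P s"
proof (cases "P s = 0")
  case True
  then have "hi P s = lo P s" using len_eq[OF P, of s] by simp
  then show ?thesis unfolding ends_snoc by simp
next
  case False
  then have pos: "0 < P s" using proc_nonneg[OF P, of s] by simp
  have "(\<Sum>k\<in>{k. k \<le> x}. cond_prob P s k) \<le> (\<Sum>k\<in>UNIV. cond_prob P s k)"
    by (rule sum_mono2) (auto simp: cond_nonneg[OF P])
  then have "(\<Sum>k\<in>{k. k \<le> x}. cond_prob P s k) \<le> 1" using cond_sum_all[OF P pos] by simp
  then have "(hi P s - lo P s) * (\<Sum>k\<in>{k. k \<le> x}. cond_prob P s k) \<le> (hi P s - lo P s) * 1"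
    using len_eq[OF P, of s] pos by (intro mult_left_mono) simp_all
  then show ?thesis unfolding ends_snoc by simp
qed

lemma nest: assumes P: "process P" shows "lo P s \<le> lo P (s @ t) \<and> hi P (s @ t) \<le> hi P s"
proof (induction t rule: rev_induct)
  case Nil then show ?case by simp
next
  case (snoc x t)
  then show ?case using lo_mono_snoc[OF P, of "s @ t" x] hi_mono_snoc[OF P, of "s @ t" x] by simp
qed

lemma lo_hi_bounds: assumes P: "process P" shows "0 \<le> lo P s" "hi P s \<le> 1"
  using nest[OF P, of "[]" s] by (simp_all add: lo_def hi_def ends_def)

lemma siblings: assumes P: "process P" and xx: "x < x'" shows "hi P (s @ [x]) \<le> lo P (s @ [x'])"
proof -
  have "(\<Sum>k\<in>{k. k \<le> x}. cond_prob P s k) \<le> (\<Sum>k\<in>{k. k < x'}. cond_prob P s k)"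
    by (rule sum_mono2) (use xx in \<open>auto simp: cond_nonneg[OF P]\<close>)
  then have "(hi P s - lo P s) * (\<Sum>k\<in>{k. k \<le> x}. cond_prob P s k) \<le> (hi P s - lo P s) * (\<Sum>k\<in>{k. k < x'}. cond_prob P s k)"
    using len_eq[OF P, of s] by (intro mult_left_mono) (simp_all add: proc_nonneg[OF P])
  then show ?thesis unfolding ends_snoc by simp
qed

lemma disjoint_same_len:
  assumes P: "process P"
  shows "length s = n \<Longrightarrow> length s' = n \<Longrightarrow> s \<noteq> s' \<Longrightarrow> interval P s \<inter> interval P s' = {}"
proof (induction n arbitrary: s s')
  case 0 then show ?case by simp
next
  case (Suc n)
  obtain u x where s: "s = u @ [x]" and u: "length u = n"
    using Suc.prems(1) by (metis length_Suc_conv_rev)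
  obtain u' x' where s': "s' = u' @ [x']" and u': "length u' = n"
    using Suc.prems(2) by (metis length_Suc_conv_rev)
  show ?case
  proof (cases "u = u'")
    case True
    then have "x \<noteq> x'" using Suc.prems(3) s s' by simp
    then consider "x < x'" | "x' < x" by fastforce
    then show ?thesis
    proof cases
      case 1
      then have "hi P (u @ [x]) \<le> lo P (u' @ [x'])" using siblings[OF P] True by simp
      then show ?thesis unfolding s s' interval_eq by auto
    next
      case 2
      then have "hi P (u' @ [x']) \<le> lo P (u @ [x])" using siblings[OF P] True by simp
      then show ?thesis unfolding s s' interval_eq by auto
    qed
  next
    case False
    then have "interval P u \<inter> interval P u' = {}" using Suc.IH u u' by blast
    moreover have "interval P s \<subseteq> interval P u" "interval P s' \<subseteq> interval P u'"
      unfolding s s' interval_eq using nest[OF P, of u "[x]"] nest[OF P, of u' "[x']"] by auto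
    ultimately show ?thesis by blast
  qed
qed

lemma cover_snoc:
  fixes P :: "'a::{finite,linorder} list \<Rightarrow> real"
  assumes P: "process P" and v: "lo P s \<le> v" "v < hi P s"
  shows "\<exists>x. v \<in> interval P (s @ [x])"
proof -
  have pos: "0 < P s" using len_eq[OF P, of s] v by simp
  define up where "up x = hi P (s @ [x])" for x
  define xm where "xm = Max (UNIV :: 'a set)"
  have "{k. k \<le> xm} = UNIV" unfolding xm_def by auto
  then have "up xm = lo P s + (hi P s - lo P s) * 1"
    unfolding up_def ends_snoc using cond_sum_all[OF P pos] by simp
  then have ex: "v < up xm" using v by simp
  define x0 where "x0 = Min {x. v < up x}"
  have ne: "{x. v < up x} \<noteq> {}" using ex by blast
  have x0: "v < up x0" unfolding x0_def using Min_in[OF finite ne] by blast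
  have lx0: "lo P (s @ [x0]) \<le> v"
  proof (cases "{k. k < x0} = {}")
    case True
    then show ?thesis unfolding ends_snoc using v by simp
  next
    case False
    define x' where "x' = Max {k. k < x0}"
    have x'1: "x' < x0" unfolding x'_def using False by (metis (mono_tags) Max_in finite mem_Collect_eq)
    have "{k. k < x0} = {k. k \<le> x'}"
    proof (rule set_eqI, rule iffI)
      fix k assume "k \<in> {k. k < x0}"
      then show "k \<in> {k. k \<le> x'}" unfolding x'_def by simp
    next
      fix k assume "k \<in> {k. k \<le> x'}"
      then show "k \<in> {k. k < x0}" using x'1 by simp
    qed
    then have "lo P (s @ [x0]) = up x'" unfolding up_def ends_snoc by simp
    moreover have "\<not> v < up x'"
    proof
      assume "v < up x'"
      then have "x0 \<le> x'" unfolding x0_def by (intro Min_le) simp_all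
      then show False using x'1 by simp
    qed
    ultimately show ?thesis by simp
  qed
  show ?thesis using x0 lx0 unfolding interval_eq up_def by auto
qed

lemma cover:
  fixes P :: "'a::{finite,linorder} list \<Rightarrow> real"
  assumes P: "process P" and v: "0 \<le> v" "v < 1"
  shows "\<exists>y. length y = n \<and> v \<in> interval P y"
proof (induction n)
  case 0
  then show ?case using v by (simp add: interval_eq lo_def hi_def ends_def)
next
  case (Suc n)
  then obtain y where y: "length y = n" "v \<in> interval P y" by blast
  then obtain x where "v \<in> interval P (y @ [x])" using cover_snoc[OF P, of y v] unfolding interval_eq by auto
  then show ?case using y by (intro exI[of _ "y @ [x]"]) simp
qed

lemma Ico_sets: "{a..<b::real} \<in> sets lborel" by simp
lemma Icc_sets: "{a..b::real} \<in> sets lborel" by simp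

lemma interval_sets: "interval P s \<in> sets lborel" unfolding interval_eq by simp
lemma interval_sets_b: "interval P s \<in> sets borel" unfolding interval_eq by simp

lemma measure_interval: assumes P: "process P" shows "measure lborel (interval P s) = P s"
proof -
  have "lo P s \<le> hi P s" using len_eq[OF P, of s] proc_nonneg[OF P, of s] by simp
  then show ?thesis unfolding interval_eq using len_eq[OF P, of s] by simp
qed

lemma KI:
  fixes PX :: "'a::{finite,linorder} list \<Rightarrow> real" and PY :: "'b::{finite,linorder} list \<Rightarrow> real"
  assumes PX: "process PX" and PY: "process PY" and d: "0 < \<delta>" and e: "0 < \<epsilon>"
  shows "(\<Sum>x \<in> {x. length x = m \<and> PX x \<le> \<delta> \<and> \<not> (\<exists>y. length y = n \<and> interval PX x \<subseteq> interval PY y)}. PX x)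
         \<le> (\<Sum>y | length y = n \<and> PY y \<le> \<epsilon>. PY y) + 4 * \<delta> * real (card {y. length y = n \<and> \<epsilon> \<le> PY y})"
proof -
  define B where "B = {x. length x = m \<and> PX x \<le> \<delta> \<and> \<not> (\<exists>y. length y = n \<and> interval PX x \<subseteq> interval PY y)}"
  define Sm where "Sm = {y::'b list. length y = n \<and> PY y \<le> \<epsilon>}"
  define Bg where "Bg = {y::'b list. length y = n \<and> \<not> PY y \<le> \<epsilon>}"
  define N where "N y = {lo PY y - \<delta> .. lo PY y + \<delta>} \<union> {hi PY y - \<delta> .. hi PY y + \<delta>}" for y
  have fB: "finite B" unfolding B_def by (rule finite_len)
  have fSm: "finite Sm" unfolding Sm_def by (rule finite_len)
  have fBg: "finite Bg" unfolding Bg_def by (rule finite_len)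
  have sumB: "(\<Sum>x\<in>B. PX x) = measure lborel (\<Union>x\<in>B. interval PX x)"
  proof -
    have "measure lborel (\<Union>x\<in>B. interval PX x) = (\<Sum>x\<in>B. measure lborel (interval PX x))"
    proof (rule measure_finite_Union[OF fB])
      show "(\<lambda>x. interval PX x) ` B \<subseteq> sets lborel" using interval_sets by blast
      show "disjoint_family_on (\<lambda>x. interval PX x) B"
        unfolding disjoint_family_on_def B_def using disjoint_same_len[OF PX] by blast
      show "emeasure lborel (interval PX x) \<noteq> \<infinity>" for x
      proof -
        have "lo PX x \<le> hi PX x" using len_eq[OF PX, of x] proc_nonneg[OF PX, of x] by simp
        then show ?thesis unfolding interval_eq by simp
      qed
    qed
    then show ?thesis using measure_interval[OF PX] by simp
  qed
  have sub: "(\<Union>x\<in>B. interval PX x) \<subseteq> (\<Union>y\<in>Sm. interval PY y) \<union> (\<Union>y\<in>Bg. N y)"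
  proof
    fix u assume "u \<in> (\<Union>x\<in>B. interval PX x)"
    then obtain x where x: "x \<in> B" and ux: "u \<in> interval PX x" by blast
    have xl: "length x = m" and xd: "PX x \<le> \<delta>" and nc: "\<And>y. length y = n \<Longrightarrow> \<not> interval PX x \<subseteq> interval PY y"
      using x unfolding B_def by auto
    have u01: "0 \<le> u" "u < 1" using ux lo_hi_bounds[OF PX, of x] unfolding interval_eq by auto
    obtain y where y: "length y = n" "u \<in> interval PY y" using cover[OF PY u01] by blast
    show "u \<in> (\<Union>y\<in>Sm. interval PY y) \<union> (\<Union>y\<in>Bg. N y)"
    proof (cases "PY y \<le> \<epsilon>")
      case True
      then have "y \<in> Sm" unfolding Sm_def using y by simp
      then show ?thesis using y by blast
    next
      case False
      then have yB: "y \<in> Bg" unfolding Bg_def using y by simp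
      obtain v where v: "v \<in> interval PX x" "v \<notin> interval PY y" using nc[OF y(1)] by blast
      have lenx: "hi PX x - lo PX x \<le> \<delta>" using len_eq[OF PX, of x] xd by simp
      have uv: "\<bar>u - v\<bar> < \<delta>" using ux v(1) lenx unfolding interval_eq by auto
      have "u \<in> N y"
      proof (cases "v < lo PY y")
        case True
        then have "lo PY y \<le> u" "u - lo PY y < \<delta>" using y(2) uv unfolding interval_eq by auto
        then show ?thesis unfolding N_def by auto
      next
        case False
        then have "hi PY y \<le> v" using v(2) unfolding interval_eq by auto
        moreover have "u < hi PY y" using y(2) unfolding interval_eq by auto
        ultimately have "u < hi PY y" "hi PY y - u < \<delta>" using uv by auto
        then show ?thesis unfolding N_def by auto
      qed
      then show ?thesis using yB by blast
    qed
  qed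
  have RHS_sets: "(\<Union>y\<in>Sm. interval PY y) \<union> (\<Union>y\<in>Bg. N y) \<in> sets lborel"
    by (intro sets.Un sets.finite_UN fSm fBg) (simp_all add: N_def interval_sets interval_sets_b)
  have RHS_sub: "(\<Union>y\<in>Sm. interval PY y) \<union> (\<Union>y\<in>Bg. N y) \<subseteq> {-(\<delta>+1) .. \<delta>+2}"
    using lo_hi_bounds[OF PY] len_eq[OF PY] proc_nonneg[OF PY] d
    by (auto simp: N_def interval_eq) (smt (verit))+
  have RHS_fm: "(\<Union>y\<in>Sm. interval PY y) \<union> (\<Union>y\<in>Bg. N y) \<in> fmeasurable lborel"
    by (rule fmeasurableI2[OF fmeasurable_compact[OF compact_Icc] RHS_sub RHS_sets])
  have LHS_sets: "(\<Union>x\<in>B. interval PX x) \<in> sets lborel" by (intro sets.finite_UN fB) (simp_all add: interval_sets interval_sets_b)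
  have "(\<Sum>x\<in>B. PX x) \<le> measure lborel ((\<Union>y\<in>Sm. interval PY y) \<union> (\<Union>y\<in>Bg. N y))"
    unfolding sumB by (rule measure_mono_fmeasurable[OF sub LHS_sets RHS_fm])
  also have "\<dots> \<le> measure lborel (\<Union>y\<in>Sm. interval PY y) + measure lborel (\<Union>y\<in>Bg. N y)"
    by (rule measure_Un_le) (intro sets.finite_UN fSm fBg; simp add: N_def interval_sets interval_sets_b)+
  also have "measure lborel (\<Union>y\<in>Sm. interval PY y) \<le> (\<Sum>y\<in>Sm. measure lborel (interval PY y))"
    by (rule measure_UNION_le[OF fSm]) (simp add: interval_sets interval_sets_b)
  also have "\<dots> = (\<Sum>y\<in>Sm. PY y)" using measure_interval[OF PY] by simp
  also have "measure lborel (\<Union>y\<in>Bg. N y) \<le> (\<Sum>y\<in>Bg. measure lborel (N y))"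
    by (rule measure_UNION_le[OF fBg]) (simp add: N_def)
  also have "\<dots> \<le> (\<Sum>y\<in>Bg. 4 * \<delta>)"
  proof (rule sum_mono)
    fix y
    have "measure lborel (N y) \<le> measure lborel {lo PY y - \<delta> .. lo PY y + \<delta>} + measure lborel {hi PY y - \<delta> .. hi PY y + \<delta>}"
      unfolding N_def by (rule measure_Un_le) simp_all
    also have "\<dots> = 4 * \<delta>" using d by simp
    finally show "measure lborel (N y) \<le> 4 * \<delta>" .
  qed
  also have "\<dots> = 4 * \<delta> * real (card Bg)" by simp
  also have "\<dots> \<le> 4 * \<delta> * real (card {y. length y = n \<and> \<epsilon> \<le> PY y})"
  proof -
    have "card Bg \<le> card {y. length y = n \<and> \<epsilon> \<le> PY y}"
      by (rule card_mono[OF finite_len]) (auto simp: Bg_def)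
    then show ?thesis using d by simp
  qed
  finally show ?thesis unfolding B_def Sm_def by simp
qed

lemma sum_le_le_prob_ge:
  assumes P: "process P" and n: "0 < n"
  shows "(\<Sum>y | length y = n \<and> P y \<le> 2 powr (- (real n * t)). P y) \<le> prob_len P n (\<lambda>s. t \<le> info_rate P n s)"
  unfolding prob_len_def
proof -
  let ?A = "{s. length s = n \<and> t \<le> info_rate P n s}"
  let ?B = "{y. length y = n \<and> P y \<le> 2 powr (- (real n * t))}"
  have "(\<Sum>s\<in>?B. P s) = (\<Sum>s\<in>?B \<inter> {s. 0 < P s}. P s)"
    by (rule sum.mono_neutral_right) (auto simp: finite_len less_le proc_nonneg[OF P])
  also have "\<dots> \<le> (\<Sum>s\<in>?A. P s)"
  proof (rule sum_mono2)
    show "?B \<inter> {s. 0 < P s} \<subseteq> ?A"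
    proof
      fix y assume y: "y \<in> ?B \<inter> {s. 0 < P s}"
      then have "0 < P y" by simp
      then show "y \<in> ?A" using y info_ge_iff[OF _ n, of P y t] by simp
    qed
  qed (auto simp: finite_len proc_nonneg[OF P])
  finally show "(\<Sum>s\<in>?B. P s) \<le> (\<Sum>s\<in>?A. P s)" .
qed

lemma achieve:
  fixes PX :: "'a::{finite,linorder} list \<Rightarrow> real" and PY :: "'b::{finite,linorder} list \<Rightarrow> real"
  assumes PX: "process PX" and PY: "process PY" and hx: "0 < inf_ent PX"
    and R: "sup_ent PY / inf_ent PX < R"
  shows "achievable PX (\<lambda>n. interval_alg PX PY n) R"
proof -
  have HY0: "0 \<le> sup_ent PY" by (rule sup_ent_nonneg[OF PY])
  have "0 \<le> sup_ent PY / inf_ent PX" using HY0 hx by simp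
  then have R0: "0 < R" using R by linarith
  have Dpos: "sup_ent PY < R * inf_ent PX" using R hx by (simp add: divide_less_eq mult.commute)
  define D where "D = R * inf_ent PX - sup_ent PY"
  have D: "0 < D" using Dpos unfolding D_def by simp
  define g where "g = min (inf_ent PX / 2) (D / (2 * (R + 1)))"
  have g: "0 < g" unfolding g_def using hx D R0 by simp
  have g1: "g \<le> inf_ent PX / 2" unfolding g_def by (rule min.cobounded1)
  have g2: "(R + 1) * g \<le> D / 2"
  proof -
    have "g \<le> D / (2 * (R + 1))" unfolding g_def by (rule min.cobounded2)
    then have "(R + 1) * g \<le> (R + 1) * (D / (2 * (R + 1)))" using R0 by (intro mult_left_mono) simp_all
    also have "\<dots> = D / 2" using R0 by (simp add: field_simps)
    finally show ?thesis .
  qed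
  define a where "a = inf_ent PX - g"
  have a0: "0 < a" using g1 hx unfolding a_def by simp
  have aI: "a \<in> INFset PX" by (rule D3[OF PX]) (use g in \<open>simp add: a_def\<close>)
  define b where "b = sup_ent PY + g"
  have bS: "b \<in> SUPset PY" unfolding b_def by (rule D1[OF PY g])
  define c where "c = R * a - b"
  have c_eq: "c = D - (R + 1) * g" unfolding c_def a_def b_def D_def by (simp add: algebra_simps)
  have c: "0 < c" using c_eq g2 D by simp
  define m where "m n = nat \<lfloor>real n * R\<rfloor>" for n
  have mge: "real n * R - 1 \<le> real (m n)" for n
  proof -
    have "0 \<le> \<lfloor>real n * R\<rfloor>" using R0 by simp
    then have "real (m n) = of_int \<lfloor>real n * R\<rfloor>" unfolding m_def by simp
    then show ?thesis by linarith
  qed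
  have key: "prob_T_gt PX (interval_alg PX PY n) (real n * R) \<le> prob_len PX (m n) (\<lambda>s. info_rate PX (m n) s \<le> a)
      + prob_len PY n (\<lambda>s. b \<le> info_rate PY n s) + 4 * 2 powr a * 2 powr (- (real n * c))"
    if n: "1 \<le> n" "1 \<le> m n" for n
  proof -
    define \<delta> where "\<delta> = 2 powr (- (real (m n) * a))"
    define \<epsilon> where "\<epsilon> = 2 powr (- (real n * b))"
    have d0: "0 < \<delta>" "0 < \<epsilon>" unfolding \<delta>_def \<epsilon>_def by simp_all
    define NC where "NC = {x. length x = m n \<and> \<not> (\<exists>ys. length ys = n \<and> interval PX x \<subseteq> interval PY ys)}"
    have fNC: "finite NC" unfolding NC_def by (rule finite_len)
    have "prob_T_gt PX (interval_alg PX PY n) (real n * R) = (\<Sum>u\<in>Ushort (interval_alg PX PY n) (m n). PX u)"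
      unfolding prob_T_gt_eq m_def ..
    also have "\<dots> \<le> (\<Sum>x\<in>NC. PX x)"
    proof (rule sum_mono2[OF fNC])
      show "Ushort (interval_alg PX PY n) (m n) \<subseteq> NC"
      proof
        fix u assume u: "u \<in> Ushort (interval_alg PX PY n) (m n)"
        then have "interval_alg PX PY n (take (m n) u) = None" and lu: "length u = m n"
          unfolding Ushort_def by auto
        then have "interval_alg PX PY n u = None" by simp
        then have "\<not> (\<exists>ys. length ys = n \<and> interval PX u \<subseteq> interval PY ys)"
          unfolding interval_alg_def by (simp split: if_splits)
        then show "u \<in> NC" unfolding NC_def using lu by simp
      qed
    qed (simp add: proc_nonneg[OF PX])
    also have "(\<Sum>x\<in>NC. PX x) = (\<Sum>x\<in>NC \<inter> {x. \<delta> < PX x}. PX x) + (\<Sum>x\<in>NC - {x. \<delta> < PX x}. PX x)"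
      by (rule sum.Int_Diff[OF fNC])
    also have "(\<Sum>x\<in>NC \<inter> {x. \<delta> < PX x}. PX x) \<le> (\<Sum>x | length x = m n \<and> \<delta> < PX x. PX x)"
      by (rule sum_mono2) (auto simp: NC_def finite_len proc_nonneg[OF PX])
    also have "\<dots> \<le> prob_len PX (m n) (\<lambda>s. info_rate PX (m n) s \<le> a)"
      unfolding \<delta>_def by (rule sum_gt_le_prob_le[OF PX]) (use n in simp)
    also have "NC - {x. \<delta> < PX x} = {x. length x = m n \<and> PX x \<le> \<delta> \<and> \<not> (\<exists>y. length y = n \<and> interval PX x \<subseteq> interval PY y)}"
      unfolding NC_def by auto
    also have "(\<Sum>x\<in>\<dots>. PX x) \<le> (\<Sum>y | length y = n \<and> PY y \<le> \<epsilon>. PY y) + 4 * \<delta> * real (card {y. length y = n \<and> \<epsilon> \<le> PY y})"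
      by (rule KI[OF PX PY d0])
    also have "(\<Sum>y | length y = n \<and> PY y \<le> \<epsilon>. PY y) \<le> prob_len PY n (\<lambda>s. b \<le> info_rate PY n s)"
      unfolding \<epsilon>_def by (rule sum_le_le_prob_ge[OF PY]) (use n in simp)
    also have "4 * \<delta> * real (card {y. length y = n \<and> \<epsilon> \<le> PY y}) \<le> 4 * 2 powr a * 2 powr (- (real n * c))"
    proof -
      have cb: "real (card {y. length y = n \<and> \<epsilon> \<le> PY y}) * \<epsilon> \<le> 1" by (rule card_big[OF PY d0(2)])
      have "real (card {y. length y = n \<and> \<epsilon> \<le> PY y}) \<le> 2 powr (real n * b)"
      proof -
        have "real (card {y. length y = n \<and> \<epsilon> \<le> PY y}) = real (card {y. length y = n \<and> \<epsilon> \<le> PY y}) * \<epsilon> * 2 powr (real n * b)"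
          unfolding \<epsilon>_def by (simp add: powr_minus)
        also have "\<dots> \<le> 1 * 2 powr (real n * b)" by (rule mult_right_mono[OF cb]) simp
        finally show ?thesis by simp
      qed
      then have "\<delta> * real (card {y. length y = n \<and> \<epsilon> \<le> PY y}) \<le> \<delta> * 2 powr (real n * b)"
        using d0 by (intro mult_left_mono) simp_all
      also have "\<dots> = 2 powr (real n * b - real (m n) * a)" unfolding \<delta>_def by (simp add: powr_add[symmetric])
      also have "\<dots> \<le> 2 powr (a - real n * c)"
      proof -
        have "(real n * R - 1) * a \<le> real (m n) * a" using mge[of n] a0 by (simp add: mult_right_mono)
        then have "real n * b - real (m n) * a \<le> a - real n * c" unfolding c_def by (simp add: algebra_simps)
        then show ?thesis by simp
      qed
      also have "\<dots> = 2 powr a * 2 powr (- (real n * c))" by (simp add: powr_add[symmetric])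
      finally show ?thesis by simp
    qed
    finally show ?thesis by simp
  qed
  obtain N where N: "\<forall>n\<ge>N. 1 \<le> m n" using floor_mult_big[OF R0, of 1] unfolding m_def by blast
  have "(\<lambda>n. prob_T_gt PX (interval_alg PX PY n) (real n * R)) \<longlonglongrightarrow> 0"
  proof (rule real_tendsto_sandwich[OF _ _ tendsto_const])
    show "\<forall>\<^sub>F n in sequentially. 0 \<le> prob_T_gt PX (interval_alg PX PY n) (real n * R)"
      unfolding prob_T_gt_eq by (simp add: sum_nonneg proc_nonneg[OF PX])
    show "\<forall>\<^sub>F n in sequentially. prob_T_gt PX (interval_alg PX PY n) (real n * R) \<le> prob_len PX (m n) (\<lambda>s. info_rate PX (m n) s \<le> a)
      + prob_len PY n (\<lambda>s. b \<le> info_rate PY n s) + 4 * 2 powr a * 2 powr (- (real n * c))"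
    proof (rule eventually_sequentiallyI[of "max 1 N"])
      fix n assume nn: "max 1 N \<le> n"
      then have n1: "1 \<le> n" and n2: "1 \<le> m n" using N by auto
      show "prob_T_gt PX (interval_alg PX PY n) (real n * R) \<le> prob_len PX (m n) (\<lambda>s. info_rate PX (m n) s \<le> a)
      + prob_len PY n (\<lambda>s. b \<le> info_rate PY n s) + 4 * 2 powr a * 2 powr (- (real n * c))"
        by (rule key[OF n1 n2])
    qed
    have l1: "(\<lambda>n. prob_len PX (m n) (\<lambda>s. info_rate PX (m n) s \<le> a)) \<longlonglongrightarrow> 0"
    proof (rule lim_comp[where f="\<lambda>k. prob_len PX k (\<lambda>s. info_rate PX k s \<le> a)"])
      show "(\<lambda>k. prob_len PX k (\<lambda>s. info_rate PX k s \<le> a)) \<longlonglongrightarrow> 0" using aI unfolding INFset_def by simp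
      show "\<exists>N. \<forall>n\<ge>N. Z \<le> m n" for Z unfolding m_def by (rule floor_mult_big[OF R0])
    qed
    have l2: "(\<lambda>n. prob_len PY n (\<lambda>s. b \<le> info_rate PY n s)) \<longlonglongrightarrow> 0" using bS unfolding SUPset_def by simp
    have l3: "(\<lambda>n. 4 * 2 powr a * 2 powr (- (real n * c))) \<longlonglongrightarrow> 0"
      using tendsto_mult_right_zero[OF exp_lim[OF c], of "4 * 2 powr a"] by simp
    show "(\<lambda>n. prob_len PX (m n) (\<lambda>s. info_rate PX (m n) s \<le> a)
      + prob_len PY n (\<lambda>s. b \<le> info_rate PY n s) + 4 * 2 powr a * 2 powr (- (real n * c))) \<longlonglongrightarrow> 0"
      using tendsto_add[OF tendsto_add[OF l1 l2] l3] by simp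
  qed
  then show ?thesis unfolding achievable_def using R0 by simp
qed

lemma R_star_int_upper:
  fixes PX :: "'a::{finite,linorder} list \<Rightarrow> real" and PY :: "'b::{finite,linorder} list \<Rightarrow> real"
  assumes PX: "process PX" and PY: "process PY" and hx: "0 < inf_ent PX"
  shows "R_star_int PX PY \<le> ereal (sup_ent PY / inf_ent PX)"
  unfolding R_star_int_def
proof (rule ereal_le_epsilon2)
  fix e :: real assume e: "0 < e"
  have "achievable PX (\<lambda>n. interval_alg PX PY n) (sup_ent PY / inf_ent PX + e)"
    by (rule achieve[OF PX PY hx]) (use e in simp)
  then have "ereal (sup_ent PY / inf_ent PX + e) \<in> {ereal R |R. achievable PX (\<lambda>n. interval_alg PX PY n) R}"
    by blast
  then have "Inf {ereal R |R. achievable PX (\<lambda>n. interval_alg PX PY n) R} \<le> ereal (sup_ent PY / inf_ent PX + e)"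
    by (rule Inf_lower)
  then show "Inf {ereal R |R. achievable PX (\<lambda>n. interval_alg PX PY n) R} \<le> ereal (sup_ent PY / inf_ent PX) + ereal e"
    by simp
qed

theorem theorem3:
  fixes PX :: "'a::{finite,linorder} list \<Rightarrow> real"
    and PY :: "'b::{finite,linorder} list \<Rightarrow> real"
  assumes "process PX" and "process PY" and "inf_ent PX > 0"
  shows "R_star_int PX PY \<le> ereal (sup_ent PY / inf_ent PX) \<and>
         R_star PX PY \<ge> ereal (max (sup_ent PY / sup_ent PX) (inf_ent PY / inf_ent PX))"
  using R_star_int_upper[OF assms] R_star_lower[OF assms] by simp


end
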